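(* Let $d,m$ be positive integers. (1) The elements $L^{(=)}_a=((0,1,\dots,d-1),(\lambda(a,1),\lambda(a,0),\dots,\lambda(a,0)))$, for $a\in(\mathbb{Z}/m\mathbb{Z})^{\ast}$ with $a^d\equiv1\pmod{\operatorname{rad}'(m)}$, form a complete system of representatives of the conjugacy classes of $W_=(d,m)$ consisting of $(dm)$-cycles. (2) Fix a set $R$ containing exactly one element of each conjugacy class of involutions of $\operatorname{Hol}(\mathbb{Z}/m\mathbb{Z})$. The elements $$\big((0,1)(2,3)\cdots(2k-2,2k-1),\ (\lambda(a,0),\dots,\lambda(a,0),\lambda(a,b_{2k}),\dots,\lambda(a,b_{d-1}))\big),$$ where $k\in\{0,\dots,\lfloor d/2\rfloor\}$, $a\in(\mathbb{Z}/m\mathbb{Z})^{\ast}$ with $a^2=1$, and $(\lambda(a,b_{2k}),\dots,\lambda(a,b_{d-1}))$ ranges over lexicographically ordered $(d-2k)$-tuples of elements of $R$ with first parameter $a$, form a complete system of representatives of the conjugacy classes of involutions of $W_=(d,m)$.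
   Context: $\operatorname{Hol}(\mathbb{Z}/m\mathbb{Z})$ consists of permutations $\lambda(a,b):x\mapsto ax+b$ of $\mathbb{Z}/m\mathbb{Z}$ ($a$ a unit). $W(d,m)=\operatorname{Hol}(\mathbb{Z}/m\mathbb{Z})\wr_{\mathrm{imp}}\operatorname{Sym}(d)$ is the permutation group on $\mathbb{Z}/m\mathbb{Z}\times\{0,\dots,d-1\}$ of pairs $(\sigma,(g_0,\dots,g_{d-1}))$ acting by $(x,i)\mapsto(g_{\sigma(i)}(x),\sigma(i))$; $W_=(d,m)$ is its subgroup of elements $(\psi,(\lambda(a,b_0),\dots,\lambda(a,b_{d-1})))$ with a common $a$. Conjugacy is taken within $W_=(d,m)$. An involution is an element whose square is the identity (identity included). $\operatorname{rad}'(m)=\operatorname{rad}(m)$ if $4\nmid m$ and $2\operatorname{rad}(m)$ if $4\mid m$. With each $\lambda(a,b)$ written with $a,b\in\{0,\dots,m-1\}$, a tuple is lexicographically ordered if the pairs $(a_i,b_i)$ are nondecreasing in lexicographic order. *)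

theory Defs
  imports "HOL-Computational_Algebra.Primes" "HOL-Number_Theory.Cong" "HOL-Combinatorics.Permutations"
begin

(* Z/mZ is represented by {0..<m} (naturals), with arithmetic mod m.
   The point set Z/mZ x {0,...,d-1} is {0..<m} x {0..<d}. *)

definition pts :: "nat \<Rightarrow> nat \<Rightarrow> (nat \<times> nat) set" where
  "pts d m = {0..<m} \<times> {0..<d}"

definition lam :: "nat \<Rightarrow> nat \<Rightarrow> nat \<Rightarrow> nat \<Rightarrow> nat" where
  "lam m a b x = (a * x + b) mod m"

definition is_unit_mod :: "nat \<Rightarrow> nat \<Rightarrow> bool" where
  "is_unit_mod m a \<longleftrightarrow> a < m \<and> coprime a m"

definition rad :: "nat \<Rightarrow> nat" where
  "rad m = \<Prod>(prime_factors m)"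

definition rad' :: "nat \<Rightarrow> nat" where
  "rad' m = (if 4 dvd m then 2 * rad m else rad m)"

(* The permutation of the point set given by (sigma, (lambda(a,b_0),...,lambda(a,b_{d-1}))):
   (x,i) |-> (lambda(a,b_{sigma i})(x), sigma i); extended by the identity outside the point set. *)
definition welem :: "nat \<Rightarrow> nat \<Rightarrow> (nat \<Rightarrow> nat) \<Rightarrow> nat \<Rightarrow> (nat \<Rightarrow> nat)
                      \<Rightarrow> (nat \<times> nat \<Rightarrow> nat \<times> nat)" where
  "welem d m \<sigma> a bs = (\<lambda>(x, i). if (x, i) \<in> pts d m then (lam m a (bs (\<sigma> i)) x, \<sigma> i) else (x, i))"

definition Weq :: "nat \<Rightarrow> nat \<Rightarrow> (nat \<times> nat \<Rightarrow> nat \<times> nat) set" where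
  "Weq d m = {f. \<exists>\<sigma> a bs. \<sigma> permutes {0..<d} \<and> is_unit_mod m a \<and> (\<forall>i<d. bs i < m)
                        \<and> f = welem d m \<sigma> a bs}"

definition conj_in :: "('a \<Rightarrow> 'a) set \<Rightarrow> ('a \<Rightarrow> 'a) \<Rightarrow> ('a \<Rightarrow> 'a) \<Rightarrow> bool" where
  "conj_in G f g \<longleftrightarrow> (\<exists>w\<in>G. g \<circ> w = w \<circ> f)"

(* f is an involution: its square is the identity (identity included) *)
definition involution :: "('a \<Rightarrow> 'a) \<Rightarrow> bool" where
  "involution f \<longleftrightarrow> f \<circ> f = id"

(* f is an n-cycle on the point set S where n = card S: a single orbit covering S *)
definition full_cycle_on :: "'a set \<Rightarrow> ('a \<Rightarrow> 'a) \<Rightarrow> bool" where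
  "full_cycle_on S f \<longleftrightarrow> (\<forall>p\<in>S. {(f ^^ n) p | n. True} = S)"

(* Hol(Z/mZ): elements lambda(a,b), written as pairs (a,b) with a,b in {0..m-1} *)
definition hol :: "nat \<Rightarrow> (nat \<times> nat) set" where
  "hol m = {(a, b). is_unit_mod m a \<and> b < m}"

definition hol_involution :: "nat \<Rightarrow> nat \<times> nat \<Rightarrow> bool" where
  "hol_involution m h \<longleftrightarrow> h \<in> hol m \<and>
     (\<forall>x<m. lam m (fst h) (snd h) (lam m (fst h) (snd h) x) = x)"

definition hol_conj :: "nat \<Rightarrow> nat \<times> nat \<Rightarrow> nat \<times> nat \<Rightarrow> bool" where
  "hol_conj m h h' \<longleftrightarrow> (\<exists>(c, e)\<in>hol m. \<forall>x<m.
     lam m c e (lam m (fst h) (snd h) x) = lam m (fst h') (snd h') (lam m c e x))"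

definition lex_le :: "nat \<times> nat \<Rightarrow> nat \<times> nat \<Rightarrow> bool" where
  "lex_le p q \<longleftrightarrow> fst p < fst q \<or> (fst p = fst q \<and> snd p \<le> snd q)"

definition Lrep :: "nat \<Rightarrow> nat \<Rightarrow> nat \<Rightarrow> (nat \<times> nat \<Rightarrow> nat \<times> nat)" where
  "Lrep d m a = welem d m (\<lambda>i. (i + 1) mod d) a (\<lambda>i. if i = 0 then 1 mod m else 0)"

definition pairswap :: "nat \<Rightarrow> nat \<Rightarrow> nat" where
  "pairswap k i = (if i < 2 * k then (if even i then i + 1 else i - 1) else i)"

(* ((0,1)...(2k-2,2k-1), (lambda(a,0),...,lambda(a,0),lambda(a,b_{2k}),...,lambda(a,b_{d-1}))),
   where t = [(a,b_{2k}),...,(a,b_{d-1})] *)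
definition Irep :: "nat \<Rightarrow> nat \<Rightarrow> nat \<Rightarrow> nat \<Rightarrow> (nat \<times> nat) list \<Rightarrow> (nat \<times> nat \<Rightarrow> nat \<times> nat)" where
  "Irep d m k a t = welem d m (pairswap k) a (\<lambda>i. if i < 2 * k then 0 else snd (t ! (i - 2 * k)))"

definition Iidx :: "nat \<Rightarrow> nat \<Rightarrow> (nat \<times> nat) set \<Rightarrow> (nat \<times> nat \<times> (nat \<times> nat) list) set" where
  "Iidx d m R = {(k, a, t). k \<le> d div 2 \<and> is_unit_mod m a \<and> [a ^ 2 = 1] (mod m)
      \<and> length t = d - 2 * k \<and> set t \<subseteq> R \<and> (\<forall>h\<in>set t. fst h = a) \<and> sorted_wrt lex_le t}"

end

theory Submission
  imports Defs "HOL-Library.Product_Lexorder"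
begin

definition Ssum :: "nat \<Rightarrow> nat \<Rightarrow> nat" where
  "Ssum A n = (\<Sum>j<n. A ^ j)"

lemma Ssum_0 [simp]: "Ssum A 0 = 0"
  by (simp add: Ssum_def)

lemma Ssum_Suc: "Ssum A (Suc n) = Ssum A n + A ^ n"
  by (simp add: Ssum_def)

lemma Ssum_Suc': "Ssum A (Suc n) = 1 + A * Ssum A n"
  unfolding Ssum_def by (subst sum.lessThan_Suc_shift) (simp add: sum_distrib_left)

lemma Ssum_add: "Ssum A (a + b) = Ssum A a + A ^ a * Ssum A b"
  by (induction b) (simp_all add: Ssum_Suc algebra_simps power_add)

lemma Ssum_mult: "Ssum A (n * p) = Ssum A n * Ssum (A ^ n) p"
proof (induction p)
  case 0 then show ?case by simp
next
  case (Suc p)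
  have "n * Suc p = n * p + n" by simp
  then have "Ssum A (n * Suc p) = Ssum A (n * p) + A ^ (n * p) * Ssum A n"
    by (metis Ssum_add)
  also have "\<dots> = Ssum A n * Ssum (A ^ n) (Suc p)"
    using Suc by (simp add: Ssum_Suc algebra_simps power_mult)
  finally show ?case .
qed

lemma Ssum_pos: "n > 0 \<Longrightarrow> Ssum A n > 0"
  by (cases n) (simp_all add: Ssum_Suc')

lemma Ssum_cong_n: "[A = 1] (mod p) \<Longrightarrow> [Ssum A n = n] (mod p)"
proof (induction n)
  case 0 then show ?case by simp
next
  case (Suc n)
  have "[A ^ n = 1] (mod p)" using Suc.prems cong_pow[of A 1 p n] by simp
  then have "[Ssum A n + A ^ n = n + 1] (mod p)"
    using Suc by (intro cong_add) auto
  then show ?case by (simp add: Ssum_Suc)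
qed

lemma pow_cong_lin:
  fixes t :: int
  shows "[(1 + t) ^ j = 1 + int j * t] (mod t^2)"
proof (induction j)
  case 0 then show ?case by simp
next
  case (Suc j)
  have "[(1 + t) ^ Suc j = (1 + t) * (1 + int j * t)] (mod t^2)"
    using Suc by (simp add: cong_mult)
  also have "(1 + t) * (1 + int j * t) = (1 + int (Suc j) * t) + t^2 * int j"
    by (simp add: algebra_simps power2_eq_square)
  also have "[\<dots> = 1 + int (Suc j) * t] (mod t^2)"
    by (simp add: cong_iff_dvd_diff)
  finally show ?case .
qed

lemma double_sum_int: "2 * (\<Sum>j<n. int j) = int n * (int n - 1)"
  by (induction n) (simp_all add: algebra_simps)

lemma Ssum_prime_odd:
  assumes p: "prime p" and p2: "p \<noteq> 2" and C: "[C = 1] (mod p)"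
  shows "[int (Ssum C p) = int p] (mod int p ^ 2)"
proof -
  define t where "t = int C - 1"
  have "[int C = int 1] (mod int p)" using C by (simp only: cong_int_iff)
  then have pt: "int p dvd t" unfolding t_def by (simp add: cong_iff_dvd_diff)
  have pt2: "int p ^ 2 dvd t ^ 2" using pt by (simp add: dvd_power_same)
  have "int (Ssum C p) = (\<Sum>j<p. (1 + t) ^ j)"
    unfolding Ssum_def t_def by simp
  also have "[\<dots> = (\<Sum>j<p. 1 + int j * t)] (mod t^2)"
    by (intro cong_sum pow_cong_lin)
  finally have c0: "[int (Ssum C p) = (\<Sum>j<p. 1 + int j * t)] (mod t^2)" .
  have c1: "[int (Ssum C p) = (\<Sum>j<p. 1 + int j * t)] (mod int p ^ 2)"
    by (rule cong_dvd_modulus[OF c0 pt2])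
  have "p > 2" using p p2 prime_ge_2_nat[OF p] by linarith
  then have "odd p" using p prime_odd_nat by blast
  then obtain q where q: "p = 2 * q + 1" using oddE by blast
  have "(\<Sum>j<p. 1 + int j * t) = int p + (\<Sum>j<p. int j * t)"
    by (simp add: sum.distrib)
  also have "(\<Sum>j<p. int j * t) = (\<Sum>j<p. int j) * t"
    by (simp add: sum_distrib_right)
  also have "(\<Sum>j<p. int j) = int p * int q"
  proof -
    have "2 * (\<Sum>j<p. int j) = int p * (2 * int q)"
      using double_sum_int[of p] q by simp
    then show ?thesis by simp
  qed
  finally have e: "(\<Sum>j<p. 1 + int j * t) = int p + (t * int q) * int p"
    by (simp only: mult.commute mult.left_commute)
  obtain s where s: "t = int p * s" using pt by blast
  have "int p ^ 2 dvd (t * int q) * int p" using s by (simp add: power2_eq_square)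
  then have "[(\<Sum>j<p. 1 + int j * t) = int p] (mod int p ^ 2)"
    unfolding e by (simp add: cong_iff_dvd_diff)
  with c1 show ?thesis by (rule cong_trans)
qed

lemma Ssum_prime_exact:
  assumes p: "prime p" and C: "[C = 1] (mod p)" and C4: "p = 2 \<Longrightarrow> [C = 1] (mod 4)"
  shows "\<exists>u. Ssum C p = p * u \<and> \<not> p dvd u"
proof (cases "p = 2")
  case True
  then have "C mod 4 = 1" using C4 by (simp add: cong_def)
  then have q: "C = 4 * (C div 4) + 1" by presburger
  define q where "q = C div 4"
  note q = q[folded q_def]
  have "Ssum C p = 2 * (2 * q + 1)" using True q
    by (simp add: Ssum_def numeral_2_eq_2)
  then show ?thesis using True by (intro exI[of _ "2*q+1"]) auto
next
  case False
  have c: "[int (Ssum C p) = int p] (mod int p ^ 2)" by (rule Ssum_prime_odd[OF p False C])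
  have "[int (Ssum C p) = int p] (mod int p)"
    by (rule cong_dvd_modulus[OF c]) simp
  then have "int p dvd int (Ssum C p)"
    using cong_dvd_iff[of "int (Ssum C p)" "int p" "int p"] by simp
  then have "p dvd Ssum C p" by simp
  then obtain u where u: "Ssum C p = p * u" by (rule dvdE)
  have "int p ^ 2 dvd int p * (int u - 1)"
    using c u by (simp add: cong_iff_dvd_diff algebra_simps)
  then have "int p dvd int u - 1"
    using p by (simp add: power2_eq_square prime_gt_0_nat)
  have "\<not> int p dvd int u"
  proof
    assume "int p dvd int u"
    then have "int p dvd int u - (int u - 1)" using \<open>int p dvd int u - 1\<close> by (rule dvd_diff)
    then have "int p dvd 1" by simp
    then show False using p by (simp add: prime_nat_iff)
  qed
  then show ?thesis using u by auto
qed

lemma Ssum_ppow_dvd: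
  assumes p: "prime p" and C: "[A = 1] (mod p)" and C4: "p = 2 \<Longrightarrow> [A = 1] (mod 4)"
  shows "p ^ k dvd Ssum A n \<longleftrightarrow> p ^ k dvd n"
proof (induction n arbitrary: k rule: less_induct)
  case (less n)
  show ?case
  proof (cases k)
    case 0 then show ?thesis by simp
  next
    case (Suc k')
    have pk: "p dvd p ^ k" using Suc by simp
    show ?thesis
    proof (cases "p dvd n")
      case False
      have "[Ssum A n = n] (mod p)" by (rule Ssum_cong_n[OF C])
      then have "p dvd Ssum A n \<longleftrightarrow> p dvd n" by (rule cong_dvd_iff)
      then have "\<not> p dvd Ssum A n" using False by simp
      then show ?thesis using False pk dvd_trans by blast
    next
      case True
      then obtain n' where n': "n = n' * p" by (metis dvd_def mult.commute)
      show ?thesis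
      proof (cases "n = 0")
        case True then show ?thesis by simp
      next
        case False
        have p1: "p > 1" using p prime_gt_1_nat by blast
        then have "n' < n" using n' False by simp
        note IH = less.IH[OF this]
        have C': "[A ^ n' = 1] (mod p)" using cong_pow[OF C, of n'] by simp
        have C4': "p = 2 \<Longrightarrow> [A ^ n' = 1] (mod 4)" using cong_pow[OF C4, of n'] by simp
        obtain u where u: "Ssum (A ^ n') p = p * u" and pu: "\<not> p dvd u"
          using Ssum_prime_exact[OF p C' C4'] by blast
        have cop: "coprime (p ^ k') u"
          using pu p by (simp add: prime_imp_coprime coprime_commute)
        have "p ^ k dvd Ssum A n \<longleftrightarrow> p ^ k' * p dvd Ssum A n' * u * p"
          using Suc n' u by (simp add: Ssum_mult ac_simps)
        also have "\<dots> \<longleftrightarrow> p ^ k' dvd Ssum A n' * u"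
          using p1 by (simp add: dvd_mult_cancel2)
        also have "\<dots> \<longleftrightarrow> p ^ k' dvd Ssum A n'"
          using cop by (simp add: coprime_dvd_mult_left_iff)
        also have "\<dots> \<longleftrightarrow> p ^ k' dvd n'" by (rule IH)
        also have "\<dots> \<longleftrightarrow> p ^ k dvd n"
          using Suc n' p1 by (simp add: mult.commute)
        finally show ?thesis .
      qed
    qed
  qed
qed

lemma dvd_via_prime_powers:
  fixes m X :: nat
  assumes "m > 0" "X > 0" "\<And>p k. prime p \<Longrightarrow> p ^ k dvd m \<Longrightarrow> p ^ k dvd X"
  shows "m dvd X"
proof (rule multiplicity_le_imp_dvd)
  show "m \<noteq> 0" using assms by simp
  fix p :: nat assume p: "prime p"
  have "p ^ multiplicity p m dvd X" using assms(3)[OF p multiplicity_dvd] .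
  then show "multiplicity p m \<le> multiplicity p X"
    using assms p by (intro multiplicity_geI) (auto simp: prime_gt_1_nat)
qed

lemma prime_dvd_rad:
  assumes "m > 0" "prime p" "p dvd m"
  shows "p dvd rad m"
proof -
  have "p \<in> prime_factors m" using assms by (simp add: in_prime_factors_iff)
  then show "p dvd rad m" unfolding rad_def by (intro dvd_prodI) auto
qed

lemma prime_dvd_rad':
  assumes "m > 0" "prime p" "p dvd m"
  shows "p dvd rad' m"
  using prime_dvd_rad[OF assms] unfolding rad'_def by auto

lemma four_dvd_rad':
  assumes "m > 0" "4 dvd m"
  shows "4 dvd rad' m"
proof -
  have "(2::nat) dvd m" using assms(2) by (rule dvd_trans[rotated]) simp
  then have "2 dvd rad m" using prime_dvd_rad[OF assms(1), of 2] by simp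
  then show ?thesis using assms unfolding rad'_def by auto
qed

lemma Ssum_dvd_iff:
  assumes m: "m > 0" and A: "[A = 1] (mod rad' m)"
  shows "m dvd Ssum A n \<longleftrightarrow> m dvd n"
proof (cases "n = 0")
  case True then show ?thesis by simp
next
  case False
  have key: "p ^ k dvd Ssum A n \<longleftrightarrow> p ^ k dvd n" if p: "prime p" and pk: "p ^ k dvd m" for p k
  proof (cases k)
    case 0 then show ?thesis by simp
  next
    case (Suc k')
    then have "p dvd p ^ k" by simp
    then have "p dvd m" using pk by (rule dvd_trans)
    then have "p dvd rad' m" by (rule prime_dvd_rad'[OF m p])
    then have Cp: "[A = 1] (mod p)" by (rule cong_dvd_modulus_nat[OF A])
    show ?thesis
    proof (cases "k' = 0")
      case True
      have "[Ssum A n = n] (mod p)" by (rule Ssum_cong_n[OF Cp])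
      then have "p dvd Ssum A n \<longleftrightarrow> p dvd n" by (rule cong_dvd_iff)
      then show ?thesis using Suc True by simp
    next
      case False
      have C4: "[A = 1] (mod 4)" if "p = 2"
      proof -
        have "(2::nat) ^ 2 dvd 2 ^ k" using Suc False by (intro le_imp_power_dvd) simp
        then have "(4::nat) dvd p ^ k" using that by simp
        then have "4 dvd m" using pk by (rule dvd_trans)
        then have "4 dvd rad' m" by (rule four_dvd_rad'[OF m])
        then show ?thesis by (rule cong_dvd_modulus_nat[OF A])
      qed
      show ?thesis by (rule Ssum_ppow_dvd[OF p Cp C4])
    qed
  qed
  show ?thesis
  proof
    assume md: "m dvd Ssum A n"
    show "m dvd n"
    proof (rule dvd_via_prime_powers)
      fix p k :: nat assume p: "prime p" and pk: "p ^ k dvd m"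
      have "p ^ k dvd Ssum A n" using pk md by (rule dvd_trans)
      then show "p ^ k dvd n" using key[OF p pk] by simp
    qed (use False m in auto)
  next
    assume md: "m dvd n"
    show "m dvd Ssum A n"
    proof (rule dvd_via_prime_powers)
      fix p k :: nat assume p: "prime p" and pk: "p ^ k dvd m"
      have "p ^ k dvd n" using pk md by (rule dvd_trans)
      then show "p ^ k dvd Ssum A n" using key[OF p pk] by simp
    qed (use False m Ssum_pos[of n A] in auto)
  qed
qed

definition aff :: "nat \<Rightarrow> nat \<Rightarrow> nat \<Rightarrow> nat \<Rightarrow> nat" where
  "aff m A B = (\<lambda>x. (A * x + B) mod m)"

lemma aff_pow:
  assumes "x < m"
  shows "(aff m A B ^^ n) x = (A ^ n * x + B * Ssum A n) mod m"
proof (induction n)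
  case 0 then show ?case using assms by simp
next
  case (Suc n)
  have "(aff m A B ^^ Suc n) x = (A * ((A ^ n * x + B * Ssum A n) mod m) + B) mod m"
    using Suc by (simp add: aff_def)
  also have "\<dots> = (A * (A ^ n * x + B * Ssum A n) + B) mod m"
    by (metis mod_add_left_eq mod_mult_right_eq)
  also have "A * (A ^ n * x + B * Ssum A n) + B = A ^ Suc n * x + B * Ssum A (Suc n)"
    by (simp add: Ssum_Suc' algebra_simps)
  finally show ?case .
qed

lemma coprime_of_rad':
  assumes m: "m > 0" and A: "[A = 1] (mod rad' m)"
  shows "coprime A m"
proof (rule ccontr)
  assume "\<not> coprime A m"
  then have "gcd A m \<noteq> 1" by (simp add: coprime_iff_gcd_eq_1)
  then obtain p where p: "prime p" "p dvd gcd A m" using prime_factor_nat by blast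
  then have pA: "p dvd A" and pm: "p dvd m" by auto
  have "p dvd rad' m" by (rule prime_dvd_rad'[OF m p(1) pm])
  then have "[A = 1] (mod p)" by (rule cong_dvd_modulus_nat[OF A])
  then have "p dvd A \<longleftrightarrow> p dvd 1" by (rule cong_dvd_iff)
  then show False using pA p(1) by simp
qed

lemma HD_suff:
  assumes m: "m > 0" and A: "[A = 1] (mod rad' m)" and B: "coprime B m"
    and x: "x < m" and z: "z < m"
  shows "\<exists>n. (aff m A B ^^ n) x = z"
proof -
  let ?f = "aff m A B"
  have cop: "coprime A m" by (rule coprime_of_rad'[OF m A])
  have f0: "(?f ^^ n) 0 = (B * Ssum A n) mod m" for n
    using aff_pow[where x=0 and m=m and A=A and B=B and n=n] m by simp
  have inj: "inj_on (\<lambda>i. (?f ^^ i) 0) {..<m}"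
  proof (rule inj_onI, rule ccontr)
    fix i j assume i: "i \<in> {..<m}" and j: "j \<in> {..<m}" and eq: "(?f ^^ i) 0 = (?f ^^ j) 0"
      and ne: "i \<noteq> j"
    have gen: False if ij: "i' < j'" "j' < m" and eq': "(?f ^^ i') 0 = (?f ^^ j') 0" for i' j'
    proof -
      have jj: "j' = i' + (j' - i')" using ij by simp
      have "[B * Ssum A i' + 0 = B * Ssum A i' + B * A ^ i' * Ssum A (j' - i')] (mod m)"
        using eq' f0[of i'] f0[of j'] Ssum_add[of A i' "j' - i'"] jj
        by (simp add: cong_def algebra_simps)
      then have "[0 = B * A ^ i' * Ssum A (j' - i')] (mod m)"
        by (simp only: cong_add_lcancel_nat)
      then have "[B * A ^ i' * Ssum A (j' - i') = 0] (mod m)"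
        by (rule cong_sym)
      then have "m dvd B * A ^ i' * Ssum A (j' - i')"
        by (simp only: cong_0_iff)
      moreover have "coprime (B * A ^ i') m" using B cop by simp
      ultimately have "m dvd Ssum A (j' - i')"
        using coprime_dvd_mult_right_iff[of m "B * A ^ i'" "Ssum A (j' - i')"]
        by (simp add: coprime_commute)
      then have "m dvd j' - i'" using Ssum_dvd_iff[OF m A] by simp
      then show False using ij by (simp add: nat_dvd_not_less)
    qed
    show False
    proof (cases "i < j")
      case True then show False using gen[of i j] j eq by simp
    next
      case False then have "j < i" using ne by simp
      then show False using gen[of j i] i eq by simp
    qed
  qed
  have sub: "(\<lambda>i. (?f ^^ i) 0) ` {..<m} \<subseteq> {..<m}"
  proof (rule image_subsetI)
    fix i show "(?f ^^ i) 0 \<in> {..<m}" unfolding f0 using m by simp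
  qed
  have "card ((\<lambda>i. (?f ^^ i) 0) ` {..<m}) = card {..<m}"
    using inj by (rule card_image)
  then have img: "(\<lambda>i. (?f ^^ i) 0) ` {..<m} = {..<m}"
    using sub by (intro card_subset_eq) auto
  have "x \<in> (\<lambda>i. (?f ^^ i) 0) ` {..<m}" using img x by simp
  then obtain i0 where i0: "(?f ^^ i0) 0 = x" and i0m: "i0 < m" by auto
  have "z \<in> (\<lambda>i. (?f ^^ i) 0) ` {..<m}" using img z by simp
  then obtain i where i: "(?f ^^ i) 0 = z" by auto
  have "m dvd Ssum A m" using Ssum_dvd_iff[OF m A, of m] by simp
  then have fm: "(?f ^^ m) 0 = 0"
    unfolding f0 by simp
  have "(?f ^^ (i + m - i0)) x = (?f ^^ (i + m - i0 + i0)) 0"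
    unfolding funpow_add i0[symmetric] by simp
  also have "i + m - i0 + i0 = i + m" using i0m by simp
  also have "(?f ^^ (i + m)) 0 = z" unfolding funpow_add using i fm by simp
  finally show ?thesis by blast
qed

lemma prod_primes_dvd:
  fixes X :: nat
  assumes "finite P" "\<And>p. p \<in> P \<Longrightarrow> prime p" "\<And>p. p \<in> P \<Longrightarrow> p dvd X"
  shows "\<Prod>P dvd X"
  using assms
proof (induction P rule: finite_induct)
  case empty then show ?case by simp
next
  case (insert p F)
  have cop: "coprime p (\<Prod>F)"
  proof (rule prod_coprime_right)
    fix q assume "q \<in> F"
    then show "coprime p q" using insert by (intro primes_coprime) auto
  qed
  have "\<Prod>F dvd X" using insert by auto
  moreover have "p dvd X" using insert by auto
  ultimately have "p * \<Prod>F dvd X" using cop by (intro divides_mult) auto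
  then show ?case using insert by simp
qed

lemma rad_dvd:
  fixes X :: nat
  assumes m: "m > 0" and P: "\<And>p. prime p \<Longrightarrow> p dvd m \<Longrightarrow> p dvd X"
  shows "rad m dvd X"
  unfolding rad_def using m P by (intro prod_primes_dvd) (auto simp: in_prime_factors_iff)

lemma rad'_dvd:
  fixes X :: nat
  assumes m: "m > 0" and P: "\<And>p. prime p \<Longrightarrow> p dvd m \<Longrightarrow> p dvd X"
    and F: "4 dvd m \<Longrightarrow> 4 dvd X"
  shows "rad' m dvd X"
proof (cases "4 dvd m")
  case False then show ?thesis using rad_dvd[OF m P] by (simp add: rad'_def)
next
  case True
  let ?P = "prime_factors m"
  have "(2::nat) dvd m" using True by (rule dvd_trans[rotated]) simp
  then have two: "2 \<in> ?P" using m by (simp add: in_prime_factors_iff)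
  have r: "rad m = 2 * \<Prod>(?P - {2})" unfolding rad_def
    using two by (simp add: prod.remove)
  have d1: "\<Prod>(?P - {2}) dvd X" using m P by (intro prod_primes_dvd) (auto simp: in_prime_factors_iff)
  have cop: "coprime 4 (\<Prod>(?P - {2}))"
  proof (rule prod_coprime_right)
    fix q assume q: "q \<in> ?P - {2}"
    then have "coprime 2 q" using primes_coprime[of 2 q] by (auto simp: in_prime_factors_iff)
    then have "coprime ((2::nat)^2) q" by (simp only: coprime_power_left_iff) simp
    moreover have "(2::nat)^2 = 4" by simp
    ultimately show "coprime 4 q" by (simp only:)
  qed
  have "4 * \<Prod>(?P - {2}) dvd X" using cop F[OF True] d1 by (intro divides_mult) auto
  then show ?thesis using True r by (simp add: rad'_def)
qed

lemma cong1_dvd: "A \<ge> 1 \<Longrightarrow> [A = 1] (mod q) \<longleftrightarrow> q dvd A - 1"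
  for A q :: nat by (simp add: cong_altdef_nat)

lemma aff_cong:
  assumes "q dvd m"
  shows "[aff m A B y = A * y + B] (mod q)"
proof -
  have "[aff m A B y = A * y + B] (mod m)" by (simp add: aff_def cong_def)
  then show ?thesis using assms by (rule cong_dvd_modulus_nat)
qed

lemma HD_nec:
  assumes m: "m > 0" and T: "\<And>x z. x < m \<Longrightarrow> z < m \<Longrightarrow> \<exists>n. (aff m A B ^^ n) x = z"
  shows "coprime B m \<and> [A = 1] (mod rad' m)"
proof (cases "m = 1")
  case True
  have "rad 1 = 1" by (simp add: rad_def)
  then have "rad' 1 = 1" by (simp add: rad'_def)
  then show ?thesis using True by (simp add: cong_def)
next
  case False
  then have m1: "m > 1" using m by simp
  let ?f = "aff m A B"
  have cop: "coprime B m"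
  proof (rule ccontr)
    assume "\<not> coprime B m"
    then have "gcd B m \<noteq> 1" by (simp add: coprime_iff_gcd_eq_1)
    then obtain p where p: "prime p" "p dvd gcd B m" using prime_factor_nat by blast
    have pB: "p dvd B" by (rule dvd_trans[OF p(2) gcd_dvd1])
    have pm: "p dvd m" by (rule dvd_trans[OF p(2) gcd_dvd2])
    have inv: "p dvd (?f ^^ n) 0" for n
    proof (induction n)
      case 0 then show ?case by simp
    next
      case (Suc n)
      have c: "[?f ((?f ^^ n) 0) = A * (?f ^^ n) 0 + B] (mod p)" by (rule aff_cong[OF pm])
      have "p dvd A * (?f ^^ n) 0 + B" using Suc pB by simp
      then show ?case using cong_dvd_iff[OF c] by simp
    qed
    obtain n where "(?f ^^ n) 0 = 1" using T[of 0 1] m1 by blast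
    then have "p dvd 1" using inv[of n] by simp
    then show False using p(1) by simp
  qed
  have Ap: "[A = 1] (mod p)" if p: "prime p" and pm: "p dvd m" for p
  proof (rule ccontr)
    assume nc: "\<not> [A = 1] (mod p)"
    have pi: "prime (int p)" using p by simp
    have "\<not> int p dvd int A - 1"
    proof
      assume "int p dvd int A - 1"
      then have "[int A = int 1] (mod int p)" by (simp add: cong_iff_dvd_diff)
      then show False using nc by (simp only: cong_int_iff)
    qed
    then have "coprime (int p) (int A - 1)" by (rule prime_imp_coprime[OF pi])
    then have "coprime (int A - 1) (int p)" by (simp add: coprime_commute)
    then obtain u where u: "[(int A - 1) * u = 1] (mod int p)" using cong_solve_coprime_int by blast
    define y where "y = - int B * u"
    have "[(int A - 1) * y = - int B * ((int A - 1) * u)] (mod int p)"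
      unfolding y_def by (simp add: algebra_simps)
    also have "[- int B * ((int A - 1) * u) = - int B * 1] (mod int p)"
      by (rule cong_mult[OF cong_refl u])
    finally have hy: "[(int A - 1) * y = - int B] (mod int p)" by simp
    define y0 where "y0 = nat (y mod int p)"
    have pp: "p > 0" using p prime_gt_0_nat by blast
    have y0i: "int y0 = y mod int p" unfolding y0_def using pp by simp
    have y0p: "y0 < p" using y0i pp
      by (metis of_nat_less_iff pos_mod_bound of_nat_0_less_iff)
    have "[int y0 = y] (mod int p)" unfolding y0i by (simp add: cong_def)
    then have "[(int A - 1) * int y0 + int B = (int A - 1) * y + int B] (mod int p)"
      by (intro cong_add cong_mult cong_refl)
    also have "[(int A - 1) * y + int B = - int B + int B] (mod int p)"
      by (intro cong_add hy cong_refl)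
    finally have "[(int A - 1) * int y0 + int B = 0] (mod int p)" by simp
    then have "[int (A * y0 + B) = int y0] (mod int p)"
      by (simp add: cong_iff_dvd_diff algebra_simps)
    then have fix0: "[A * y0 + B = y0] (mod p)" by (simp only: cong_int_iff)
    have inv: "[(?f ^^ n) y0 = y0] (mod p)" for n
    proof (induction n)
      case 0 then show ?case by simp
    next
      case (Suc n)
      have "[?f ((?f ^^ n) y0) = A * (?f ^^ n) y0 + B] (mod p)" by (rule aff_cong[OF pm])
      also have "[A * (?f ^^ n) y0 + B = A * y0 + B] (mod p)"
        by (intro cong_add cong_mult cong_refl Suc)
      also note fix0
      finally show ?case by simp
    qed
    have pm': "p \<le> m" using pm m by (simp add: dvd_imp_le)
    define z where "z = (y0 + 1) mod p"
    have "z < m" unfolding z_def using pp pm' by (meson mod_less_divisor order_less_le_trans)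
    moreover have "y0 < m" using y0p pm' by simp
    ultimately obtain n where "(?f ^^ n) y0 = z" using T by blast
    then have "[z = y0] (mod p)" using inv[of n] by simp
    then have "[y0 + 1 = y0 + 0] (mod p)" unfolding z_def by (simp add: cong_def)
    then have "[1 = 0] (mod p)" by (simp only: cong_add_lcancel_nat)
    then have "p dvd 1" by (simp add: cong_def)
    then show False using p by simp
  qed
  have A4: "[A = 1] (mod 4)" if m4: "4 dvd m"
  proof (rule ccontr)
    assume nc: "\<not> [A = 1] (mod 4)"
    have "(2::nat) dvd m" using m4 by (rule dvd_trans[rotated]) simp
    then have "[A = 1] (mod 2)" using Ap[of 2] by simp
    then have "A mod 2 = 1" by (simp add: cong_def)
    moreover have "A mod 4 \<noteq> 1" using nc by (simp add: cong_def)
    ultimately have A3: "A mod 4 = 3" by presburger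
    then have A3c: "[A = 3] (mod 4)" by (simp add: cong_def)
    have step2: "[?f (?f y) = y] (mod 4)" for y
    proof -
      have "[?f (?f y) = A * ?f y + B] (mod 4)" by (rule aff_cong[OF m4])
      also have "[A * ?f y + B = A * (A * y + B) + B] (mod 4)"
        by (intro cong_add cong_mult cong_refl aff_cong[OF m4])
      also have "[A * (A * y + B) + B = 3 * (3 * y + B) + B] (mod 4)"
        by (intro cong_add cong_mult cong_refl A3c)
      also have "3 * (3 * y + B) + B = y + 4 * (2 * y + B)" by (simp add: algebra_simps)
      also have "[y + 4 * (2 * y + B) = y] (mod 4)" unfolding cong_def by (rule mod_mult_self2)
      finally show ?thesis .
    qed
    have par: "[(?f ^^ (2 * j)) 0 = 0] (mod 4) \<and> [(?f ^^ (2 * j + 1)) 0 = ?f 0] (mod 4)" for j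
    proof (induction j)
      case 0 then show ?case by simp
    next
      case (Suc j)
      have e1: "(?f ^^ (2 * Suc j)) 0 = ?f (?f ((?f ^^ (2 * j)) 0))" by simp
      have e2: "(?f ^^ (2 * Suc j + 1)) 0 = ?f (?f ((?f ^^ (2 * j + 1)) 0))" by simp
      show ?case unfolding e1 e2 using Suc step2 cong_trans by blast
    qed
    define c where "c = ?f 0 mod 4"
    define z where "z = (if c = 1 then 2 else 1::nat)"
    have "4 \<le> m" using m4 m by (simp add: dvd_imp_le)
    then have "z < m" unfolding z_def by simp
    then obtain n where n: "(?f ^^ n) 0 = z" using T[of 0 z] m by blast
    have "z mod 4 = 0 \<or> z mod 4 = c"
    proof (cases "even n")
      case True
      then obtain j where "n = 2 * j" by blast
      then show ?thesis using par[of j] n by (simp add: cong_def)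
    next
      case False
      then obtain j where "n = 2 * j + 1" using oddE by blast
      then show ?thesis using par[of j] n by (simp add: cong_def c_def)
    qed
    then show False unfolding z_def by (auto split: if_splits)
  qed
  obtain p0 where p0: "prime p0" "p0 dvd m" using prime_factor_nat[of m] False by blast
  have "A \<ge> 1"
  proof (rule ccontr)
    assume "\<not> A \<ge> 1"
    then have "A = 0" by simp
    then have "[0 = 1] (mod p0)" using Ap[OF p0] by simp
    then have "p0 dvd 1" by (simp add: cong_def)
    then show False using p0 by simp
  qed
  note c1 = cong1_dvd[OF \<open>A \<ge> 1\<close>]
  have "rad' m dvd A - 1"
  proof (rule rad'_dvd[OF m])
    fix p assume "prime p" "p dvd m"
    then show "p dvd A - 1" using Ap[of p] unfolding c1 by blast
  next
    assume "4 dvd m"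
    then show "4 dvd A - 1" using A4 unfolding c1 by blast
  qed
  then show ?thesis using cop unfolding c1 by blast
qed

lemma pts_iff [simp]: "(x, i) \<in> pts d m \<longleftrightarrow> x < m \<and> i < d"
  by (simp add: pts_def)

lemma welem_in: "x < m \<Longrightarrow> i < d \<Longrightarrow> welem d m \<sigma> a bs (x, i) = ((a * x + bs (\<sigma> i)) mod m, \<sigma> i)"
  by (simp add: welem_def lam_def)

lemma welem_out: "p \<notin> pts d m \<Longrightarrow> welem d m \<sigma> a bs p = p"
  by (cases p) (auto simp: welem_def pts_def)

lemma welem_cong:
  assumes "\<And>i. i < d \<Longrightarrow> \<sigma> i = \<sigma>' i" "\<And>i. i < d \<Longrightarrow> bs (\<sigma> i) = bs' (\<sigma>' i)"
  shows "welem d m \<sigma> a bs = welem d m \<sigma>' a bs'"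
proof
  fix p show "welem d m \<sigma> a bs p = welem d m \<sigma>' a bs' p"
    using assms by (cases p) (auto simp: welem_def lam_def)
qed

lemma perm_lt: fixes \<sigma> :: "nat \<Rightarrow> nat" shows "\<sigma> permutes {0..<d} \<Longrightarrow> i < d \<Longrightarrow> \<sigma> i < d"
proof -
  assume s: "\<sigma> permutes {0..<d}" and i: "i < d"
  have "\<sigma> i \<in> {0..<d}" by (rule permutes_in_image[OF s, THEN iffD2]) (use i in simp)
  then show ?thesis by simp
qed

lemma perm_pow_lt: fixes \<sigma> :: "nat \<Rightarrow> nat" shows "\<sigma> permutes {0..<d} \<Longrightarrow> i < d \<Longrightarrow> (\<sigma> ^^ n) i < d"
  by (induction n) (auto simp: perm_lt)

lemma welem_in_pts:
  assumes "\<sigma> permutes {0..<d}" "p \<in> pts d m"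
  shows "welem d m \<sigma> a bs p \<in> pts d m"
  using assms by (cases p) (auto simp: welem_in perm_lt)

fun Hs :: "(nat \<Rightarrow> nat) \<Rightarrow> nat \<Rightarrow> (nat \<Rightarrow> nat) \<Rightarrow> nat \<Rightarrow> nat \<Rightarrow> nat" where
  "Hs \<sigma> a bs 0 i = 0"
| "Hs \<sigma> a bs (Suc n) i = a * Hs \<sigma> a bs n i + bs ((\<sigma> ^^ Suc n) i)"

lemma welem_pow:
  assumes s: "\<sigma> permutes {0..<d}" and x: "x < m" and i: "i < d"
  shows "(welem d m \<sigma> a bs ^^ n) (x, i) = ((a ^ n * x + Hs \<sigma> a bs n i) mod m, (\<sigma> ^^ n) i)"
proof (induction n)
  case 0 then show ?case using x by simp
next
  case (Suc n)
  have m: "m > 0" using x by simp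
  have "(welem d m \<sigma> a bs ^^ Suc n) (x, i) =
        welem d m \<sigma> a bs ((a ^ n * x + Hs \<sigma> a bs n i) mod m, (\<sigma> ^^ n) i)"
    using Suc by simp
  also have "\<dots> = ((a * ((a ^ n * x + Hs \<sigma> a bs n i) mod m) + bs (\<sigma> ((\<sigma> ^^ n) i))) mod m,
                   \<sigma> ((\<sigma> ^^ n) i))"
    using m perm_pow_lt[OF s i] by (simp add: welem_in)
  also have "(a * ((a ^ n * x + Hs \<sigma> a bs n i) mod m) + bs (\<sigma> ((\<sigma> ^^ n) i))) mod m
      = (a * (a ^ n * x + Hs \<sigma> a bs n i) + bs (\<sigma> ((\<sigma> ^^ n) i))) mod m"
    by (metis mod_add_left_eq mod_mult_right_eq)
  finally show ?case by (simp add: algebra_simps)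
qed

lemma Weq_E:
  assumes "g \<in> Weq d m"
  obtains \<sigma> a bs where "\<sigma> permutes {0..<d}" "is_unit_mod m a" "\<And>i. i < d \<Longrightarrow> bs i < m"
    "g = welem d m \<sigma> a bs"
  using assms unfolding Weq_def by blast

lemma WeqI:
  "\<sigma> permutes {0..<d} \<Longrightarrow> is_unit_mod m a \<Longrightarrow> (\<And>i. i < d \<Longrightarrow> bs i < m) \<Longrightarrow> welem d m \<sigma> a bs \<in> Weq d m"
  unfolding Weq_def by blast

lemma inj_on_imp_permutes:
  fixes f :: "nat \<Rightarrow> nat"
  assumes "f ` {0..<d} \<subseteq> {0..<d}" "inj_on f {0..<d}" "\<And>i. i \<ge> d \<Longrightarrow> f i = i"
  shows "f permutes {0..<d}"
proof (rule bij_imp_permutes)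
  have "card (f ` {0..<d}) = card {0..<(d::nat)}" using assms(2) by (rule card_image)
  then have "f ` {0..<d} = {0..<d}" using assms(1) by (intro card_subset_eq) auto
  then show "bij_betw f {0..<d} {0..<d}" using assms(2) by (simp add: bij_betw_def)
  fix x :: nat assume "x \<notin> {0..<d}" then show "f x = x" using assms(3) by simp
qed

lemma surj_on_imp_permutes:
  fixes f :: "nat \<Rightarrow> nat"
  assumes "f ` {0..<d} = {0..<d}" "\<And>i. i \<ge> d \<Longrightarrow> f i = i"
  shows "f permutes {0..<d}"
proof (rule inj_on_imp_permutes)
  show "inj_on f {0..<d}" using assms(1) by (intro eq_card_imp_inj_on) simp_all
qed (use assms in auto)

lemma is_unit_mod_pos: "is_unit_mod m a \<Longrightarrow> m > 0"
  by (simp add: is_unit_mod_def)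

lemma mult_invariant:
  assumes d: "d > 0" and s: "\<sigma> permutes {0..<d}" and s': "\<sigma>' permutes {0..<d}" and t: "\<tau> permutes {0..<d}"
    and a: "is_unit_mod m a" and a': "is_unit_mod m a'" and c: "is_unit_mod m c"
    and eq: "welem d m \<sigma>' a' bs' \<circ> welem d m \<tau> c es = welem d m \<tau> c es \<circ> welem d m \<sigma> a bs"
  shows "a = a'"
proof (cases "m = 1")
  case True then show ?thesis using a a' by (simp add: is_unit_mod_def)
next
  case False
  then have m: "m > 1" using is_unit_mod_pos[OF a] by simp
  have key: "(c * (a * x + bs (\<sigma> 0)) + es (\<sigma>' (\<tau> 0))) mod m = (a' * (c * x + es (\<tau> 0)) + bs' (\<sigma>' (\<tau> 0))) mod m"
    if x: "x < m" for x
  proof -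
    have "(welem d m \<tau> c es \<circ> welem d m \<sigma> a bs) (x, 0) = (welem d m \<sigma>' a' bs' \<circ> welem d m \<tau> c es) (x, 0)"
      using eq by simp
    then have "(c * ((a * x + bs (\<sigma> 0)) mod m) + es (\<sigma>' (\<tau> 0))) mod m = (a' * ((c * x + es (\<tau> 0)) mod m) + bs' (\<sigma>' (\<tau> 0))) mod m"
      using x d m perm_lt[OF s d] perm_lt[OF t d] by (auto simp add: welem_in)
    then show ?thesis by (metis mod_add_left_eq mod_mult_right_eq)
  qed
  have k0: "[c * bs (\<sigma> 0) + es (\<sigma>' (\<tau> 0)) = a' * es (\<tau> 0) + bs' (\<sigma>' (\<tau> 0))] (mod m)"
    using key[of 0] m by (simp add: cong_def)
  have k1: "[c * a + (c * bs (\<sigma> 0) + es (\<sigma>' (\<tau> 0))) = a' * c + (a' * es (\<tau> 0) + bs' (\<sigma>' (\<tau> 0)))] (mod m)"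
    using key[of 1] m by (simp add: cong_def algebra_simps)
  have "[c * a + (c * bs (\<sigma> 0) + es (\<sigma>' (\<tau> 0))) = a' * c + (c * bs (\<sigma> 0) + es (\<sigma>' (\<tau> 0)))] (mod m)"
    using k1 k0 by (metis cong_add_lcancel_nat cong_sym cong_trans cong_add cong_refl)
  then have "[c * a = c * a'] (mod m)" by (simp add: cong_add_rcancel_nat mult.commute)
  then have "[a = a'] (mod m)" using cong_mult_lcancel_nat[of c m a a'] c by (simp add: is_unit_mod_def)
  then show ?thesis using a a' by (simp add: cong_def is_unit_mod_def)
qed

lemma mod_add_cong2: "(a::nat) mod m = a' mod m \<Longrightarrow> b mod m = b' mod m \<Longrightarrow> (a + b) mod m = (a' + b') mod m"
  by (metis mod_add_eq)

lemma unit_inverse: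
  assumes c: "is_unit_mod m c"
  obtains c0 where "is_unit_mod m c0" "[c0 * c = 1] (mod m)"
proof -
  have m: "m > 0" using c by (rule is_unit_mod_pos)
  have "coprime c m" using c by (simp add: is_unit_mod_def)
  from cong_solve_coprime_nat[OF this] obtain c' where "[c * c' = Suc 0] (mod m)" by blast
  then have c': "[c * c' = 1] (mod m)" by simp
  define c0 where "c0 = c' mod m"
  have "(c' mod m * c) mod m = (c * c') mod m" by (metis mod_mult_right_eq mult.commute)
  then have e: "[c0 * c = 1] (mod m)" using c' unfolding c0_def cong_def by simp
  have "coprime (c0 * c) m" using cong_imp_coprime[OF cong_sym[OF e]] by simp
  then have "coprime c0 m" by simp
  moreover have "c0 < m" using m by (simp add: c0_def)
  ultimately have "is_unit_mod m c0" by (simp add: is_unit_mod_def)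
  with e show ?thesis using that by blast
qed

lemma Weq_inv:
  assumes w: "w \<in> Weq d m"
  obtains w' where "w' \<in> Weq d m" "w' \<circ> w = id" "w \<circ> w' = id"
proof -
  obtain \<tau> c es where t: "\<tau> permutes {0..<d}" and c: "is_unit_mod m c" and es: "\<And>i. i < d \<Longrightarrow> es i < m"
    and wd: "w = welem d m \<tau> c es" using Weq_E[OF w] by blast
  have m: "m > 0" using c by (rule is_unit_mod_pos)
  obtain c0 where c0: "is_unit_mod m c0" and cc: "[c0 * c = 1] (mod m)" using unit_inverse[OF c] by blast
  define es' where "es' = (\<lambda>j. (c0 * (m - es (\<tau> j))) mod m)"
  define w' where "w' = welem d m (inv \<tau>) c0 es'"
  have ti: "inv \<tau> permutes {0..<d}" using t by (rule permutes_inv)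
  have w'W: "w' \<in> Weq d m" unfolding w'_def
    by (rule WeqI[OF ti c0]) (simp add: es'_def m)
  have 1: "w' (w p) = p" for p
  proof (cases "p \<in> pts d m")
    case False
    then show ?thesis by (simp add: wd w'_def welem_out)
  next
    case True
    then obtain x j where p: "p = (x, j)" and x: "x < m" and j: "j < d" by (cases p) auto
    define E where "E = es (\<tau> j)"
    have E: "E < m" unfolding E_def using es perm_lt[OF t j] .
    define F where "F = m - E"
    have EF: "E + F = m" using E unfolding F_def by simp
    have "w' (w p) = ((c0 * ((c * x + E) mod m) + (c0 * F) mod m) mod m, j)"
      using p x j m perm_lt[OF t j] by (simp add: wd w'_def welem_in es'_def E_def F_def permutes_inverses(2)[OF t])
    also have "(c0 * ((c * x + E) mod m) + (c0 * F) mod m) mod m = (c0 * (c * x + E) + c0 * F) mod m"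
      by (intro mod_add_cong2) (simp_all add: mod_mult_right_eq)
    also have "c0 * (c * x + E) + c0 * F = c0 * c * x + c0 * (E + F)"
      by (simp add: algebra_simps)
    also note EF
    also have "(c0 * c * x + c0 * m) mod m = (c0 * c * x) mod m" by simp
    also have "\<dots> = (1 * x) mod m" using cong_mult[OF cc cong_refl[of x]] by (simp add: cong_def)
    also have "\<dots> = x" using x by simp
    finally show ?thesis using p by simp
  qed
  have 2: "w (w' p) = p" for p
  proof (cases "p \<in> pts d m")
    case False
    then show ?thesis by (simp add: wd w'_def welem_out)
  next
    case True
    then obtain y i where p: "p = (y, i)" and y: "y < m" and i: "i < d" by (cases p) auto
    define E where "E = es i"
    have E: "E < m" unfolding E_def using es i .
    have ii: "inv \<tau> i < d" using perm_lt[OF ti i] .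
    define F where "F = m - E"
    have EF: "F + E = m" using E unfolding F_def by simp
    have "w (w' p) = ((c * ((c0 * y + (c0 * F) mod m) mod m) + E) mod m, i)"
      using p y i m ii by (simp add: wd w'_def welem_in es'_def E_def F_def permutes_inverses(1)[OF t])
    also have "(c * ((c0 * y + (c0 * F) mod m) mod m) + E) mod m = (c * (c0 * y + c0 * F) + E) mod m"
    proof (intro mod_add_cong2)
      show "(c * ((c0 * y + c0 * F mod m) mod m)) mod m = (c * (c0 * y + c0 * F)) mod m"
        by (metis mod_add_right_eq mod_mult_right_eq)
    qed simp
    also have "c * (c0 * y + c0 * F) + E = (c0 * c) * y + ((c0 * c) * F + E)"
      by (simp add: algebra_simps)
    also have "[(c0 * c) * y + ((c0 * c) * F + E) = 1 * y + (1 * F + E)] (mod m)"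
      using cc by (intro cong_add cong_mult cong_refl)
    then have "((c0 * c) * y + ((c0 * c) * F + E)) mod m = (1 * y + (1 * F + E)) mod m"
      by (simp add: cong_def)
    also have "1 * y + (1 * F + E) = y + m" using EF by simp
    also have "(y + m) mod m = y" using y by simp
    finally show ?thesis using p by simp
  qed
  show ?thesis using that[OF w'W] 1 2 by (simp add: fun_eq_iff)
qed

lemma conj_swap:
  assumes w: "w \<in> Weq d m" and eq: "g \<circ> w = w \<circ> f"
  shows "conj_in (Weq d m) g f"
proof -
  obtain w' where w': "w' \<in> Weq d m" "w' \<circ> w = id" "w \<circ> w' = id" using Weq_inv[OF w] by blast
  have "f \<circ> w' = w' \<circ> w \<circ> f \<circ> w'" using w'(2) by (simp add: comp_assoc)
  also have "\<dots> = w' \<circ> g \<circ> w \<circ> w'" using eq by (simp add: comp_assoc)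
  also have "\<dots> = w' \<circ> g" using w'(3) by (simp add: comp_assoc)
  finally show ?thesis unfolding conj_in_def using w'(1) by blast
qed

definition rot :: "nat \<Rightarrow> nat \<Rightarrow> nat" where
  "rot d i = (if i < d then (i + 1) mod d else i)"

definition beta :: "nat \<Rightarrow> nat \<Rightarrow> nat" where
  "beta m i = (if i = 0 then 1 mod m else 0)"

lemma rot_permutes:
  assumes d: "d > 0" shows "rot d permutes {0..<d}"
proof (rule surj_on_imp_permutes)
  show "rot d ` {0..<d} = {0..<d}"
  proof
    show "rot d ` {0..<d} \<subseteq> {0..<d}" using d by (auto simp: rot_def)
    show "{0..<d} \<subseteq> rot d ` {0..<d}"
    proof
      fix j assume j: "j \<in> {0..<d}"
      show "j \<in> rot d ` {0..<d}"
      proof (cases "j = 0")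
        case True
        have "rot d (d - 1) = j" using True d by (simp add: rot_def)
        then show ?thesis using d by (metis atLeastLessThan_iff diff_less image_eqI le0 zero_less_one)
      next
        case False
        have "rot d (j - 1) = j" using False j by (simp add: rot_def)
        then show ?thesis using j by (metis atLeastLessThan_iff image_eqI le0 less_imp_diff_less)
      qed
    qed
  qed
qed (simp add: rot_def)

lemma rot_pow: "i < d \<Longrightarrow> (rot d ^^ n) i = (i + n) mod d"
proof (induction n)
  case 0 then show ?case by simp
next
  case (Suc n)
  have "(i + n) mod d < d" using Suc.prems by simp
  then show ?case using Suc by (simp add: rot_def mod_Suc_eq)
qed

lemma Lrep_eq: "d > 0 \<Longrightarrow> Lrep d m a = welem d m (rot d) a (beta m)"
  unfolding Lrep_def by (rule welem_cong) (simp_all add: rot_def beta_def)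

lemma Lrep_in_Weq: "is_unit_mod m a \<Longrightarrow> d > 0 \<Longrightarrow> Lrep d m a \<in> Weq d m"
  using is_unit_mod_pos[of m a]
  by (simp add: Lrep_eq) (rule WeqI[OF rot_permutes], simp_all add: beta_def)

lemma Hs_rot: "n < d \<Longrightarrow> Hs (rot d) a (beta m) n 0 = 0"
proof (induction n)
  case 0 then show ?case by simp
next
  case (Suc n)
  then show ?case using rot_pow[of 0 d "Suc n"] by (simp add: beta_def)
qed

lemma Hs_rot_d: "d > 0 \<Longrightarrow> Hs (rot d) a (beta m) d 0 = 1 mod m"
proof -
  assume d: "d > 0"
  then obtain d' where d': "d = Suc d'" using gr0_implies_Suc by blast
  have "Hs (rot d) a (beta m) d' 0 = 0" using d' by (intro Hs_rot) simp
  moreover have "(rot d ^^ Suc d') 0 = 0" using rot_pow[of 0 d "Suc d'"] d d' by simp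
  ultimately show ?thesis using d' by (simp add: beta_def)
qed

lemma aff_lt: "x < m \<Longrightarrow> (aff m A B ^^ k) x < m"
  by (cases k) (auto simp: aff_def)

lemma L_pow_d:
  assumes d: "d > 0" and x: "x < m"
  shows "(welem d m (rot d) a (beta m) ^^ (d * k)) (x, 0) = ((aff m (a ^ d) 1 ^^ k) x, 0)"
proof (induction k)
  case 0 then show ?case by simp
next
  case (Suc k)
  let ?L = "welem d m (rot d) a (beta m)"
  let ?y = "(aff m (a ^ d) 1 ^^ k) x"
  have y: "?y < m" using x by (rule aff_lt)
  have "(?L ^^ (d * Suc k)) (x, 0) = (?L ^^ d) ((?L ^^ (d * k)) (x, 0))"
    by (simp add: funpow_add mult_Suc_right)
  also have "\<dots> = (?L ^^ d) (?y, 0)" using Suc by simp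
  also have "\<dots> = ((a ^ d * ?y + 1 mod m) mod m, 0)"
    using welem_pow[OF rot_permutes[OF d] y d, where a=a and bs="beta m" and n=d] Hs_rot_d[OF d] rot_pow[of 0 d d] d
    by simp
  also have "(a ^ d * ?y + 1 mod m) mod m = aff m (a ^ d) 1 ?y"
    by (simp add: aff_def mod_add_right_eq)
  finally show ?case by simp
qed

lemma L_full:
  assumes a: "is_unit_mod m a" and ad: "[a ^ d = 1] (mod rad' m)" and d: "d > 0"
  shows "full_cycle_on (pts d m) (Lrep d m a)"
  unfolding full_cycle_on_def
proof
  fix p assume p: "p \<in> pts d m"
  have m: "m > 0" using a by (rule is_unit_mod_pos)
  let ?L = "welem d m (rot d) a (beta m)"
  have L: "Lrep d m a = ?L" using d by (rule Lrep_eq)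
  have inpts: "(?L ^^ n) q \<in> pts d m" if "q \<in> pts d m" for n q
    by (induction n) (use that in \<open>auto intro: welem_in_pts[OF rot_permutes[OF d]]\<close>)
  show "{(Lrep d m a ^^ n) p |n. True} = pts d m"
  proof
    show "{(Lrep d m a ^^ n) p |n. True} \<subseteq> pts d m" using inpts[OF p] L by auto
    show "pts d m \<subseteq> {(Lrep d m a ^^ n) p |n. True}"
    proof
      fix q assume q: "q \<in> pts d m"
      obtain x i where pxi: "p = (x, i)" and x: "x < m" and i: "i < d" using p by (cases p) auto
      obtain y j where qyj: "q = (y, j)" and y: "y < m" and j: "j < d" using q by (cases q) auto
      define x' where "x' = fst ((?L ^^ (d - i)) (x, i))"
      have e1: "(?L ^^ (d - i)) (x, i) = (x', 0)"
        using welem_pow[OF rot_permutes[OF d] x i, where a=a and bs="beta m" and n="d - i"] rot_pow[OF i, of "d - i"] i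
        by (simp add: x'_def)
      have x': "x' < m" using inpts[of "(x, i)" "d - i"] x i e1 by simp
      have "coprime (a ^ j) m" using a by (simp add: is_unit_mod_def)
      from cong_solve_coprime_nat[OF this] obtain v where "[a ^ j * v = Suc 0] (mod m)" by blast
      then have v: "[a ^ j * v = 1] (mod m)" by simp
      define z where "z = (v * y) mod m"
      have z: "z < m" using m by (simp add: z_def)
      have "(a ^ j * z) mod m = (a ^ j * v * y) mod m" by (simp add: z_def mod_mult_right_eq mult.assoc)
      also have "\<dots> = (1 * y) mod m" using cong_mult[OF v cong_refl[of y]] by (simp add: cong_def)
      also have "\<dots> = y" using y by simp
      finally have azy: "(a ^ j * z) mod m = y" .
      have e3: "(?L ^^ j) (z, 0) = (y, j)"
        using welem_pow[OF rot_permutes[OF d] z d, where a=a and bs="beta m" and n=j] Hs_rot[OF j] rot_pow[of 0 d j] d j azy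
        by simp
      have "coprime 1 m" by simp
      obtain k where k: "(aff m (a ^ d) 1 ^^ k) x' = z" using HD_suff[OF m ad \<open>coprime 1 m\<close> x' z] by blast
      have "(?L ^^ (j + (d * k + (d - i)))) (x, i) = (y, j)"
        by (simp only: funpow_add o_apply e1 L_pow_d[OF d x'] k e3)
      then have "(Lrep d m a ^^ (j + (d * k + (d - i)))) p = q" using L pxi qyj by simp
      then show "q \<in> {(Lrep d m a ^^ n) p |n. True}" by blast
    qed
  qed
qed

lemma L_distinct:
  assumes a: "is_unit_mod m a" and a': "is_unit_mod m a'" and d: "d > 0"
    and c: "conj_in (Weq d m) (Lrep d m a) (Lrep d m a')"
  shows "a = a'"
proof -
  obtain w where w: "w \<in> Weq d m" and eq: "Lrep d m a' \<circ> w = w \<circ> Lrep d m a"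
    using c unfolding conj_in_def by blast
  obtain \<tau> c es where t: "\<tau> permutes {0..<d}" and cu: "is_unit_mod m c" and wd: "w = welem d m \<tau> c es"
    using Weq_E[OF w] by blast
  show ?thesis
    by (rule mult_invariant[OF d rot_permutes[OF d] rot_permutes[OF d] t a a' cu])
       (use eq wd Lrep_eq[OF d] in simp)
qed

lemma comp_eq:
  fixes c a x m \<beta> E1 E0 B :: nat
  assumes "[c * \<beta> + E1 = a * E0 + B] (mod m)"
  shows "(c * ((a * x + \<beta>) mod m) + E1) mod m = (a * ((c * x + E0) mod m) + B) mod m"
proof -
  have l: "(c * ((a * x + \<beta>) mod m) + E1) mod m = (c * (a * x + \<beta>) + E1) mod m"
    by (metis mod_add_left_eq mod_mult_right_eq)
  have r: "(a * ((c * x + E0) mod m) + B) mod m = (a * (c * x + E0) + B) mod m"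
    by (metis mod_add_left_eq mod_mult_right_eq)
  have "[a * c * x + (c * \<beta> + E1) = a * c * x + (a * E0 + B)] (mod m)"
    by (rule cong_add[OF cong_refl assms])
  then have "(a * c * x + (c * \<beta> + E1)) mod m = (a * c * x + (a * E0 + B)) mod m"
    by (simp only: cong_def)
  moreover have "c * (a * x + \<beta>) + E1 = a * c * x + (c * \<beta> + E1)" by (simp add: algebra_simps)
  moreover have "a * (c * x + E0) + B = a * c * x + (a * E0 + B)" by (simp add: algebra_simps)
  ultimately show ?thesis unfolding l r by (simp only:)
qed

lemma funpow_inj_eq: fixes f :: "'a \<Rightarrow> 'a" shows "inj f \<Longrightarrow> (f ^^ n) x = (f ^^ n) y \<Longrightarrow> x = y"
proof -
  assume a: "inj f" "(f ^^ n) x = (f ^^ n) y"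
  have "inj (f ^^ n)" using a(1) by (rule inj_fn)
  then show "x = y" using a(2) by (rule injD)
qed

lemma orbit_cycle:
  fixes \<sigma> :: "nat \<Rightarrow> nat"
  assumes s: "\<sigma> permutes {0..<d}" and d: "d > 0" and cov: "\<And>j. j < d \<Longrightarrow> \<exists>n. (\<sigma> ^^ n) 0 = j"
  shows "(\<sigma> ^^ d) 0 = 0" and "\<And>n. (\<sigma> ^^ n) 0 = 0 \<Longrightarrow> d dvd n"
    and "inj_on (\<lambda>j. (\<sigma> ^^ j) 0) {0..<d}"
proof -
  have inj: "inj \<sigma>" using s by (rule permutes_inj)
  have bk: "(\<sigma> ^^ (j - i)) 0 = 0" if "i \<le> j" "(\<sigma> ^^ i) 0 = (\<sigma> ^^ j) 0" for i j
  proof -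
    have "(\<sigma> ^^ j) 0 = (\<sigma> ^^ (i + (j - i))) 0" using that(1) by simp
    also have "\<dots> = (\<sigma> ^^ i) ((\<sigma> ^^ (j - i)) 0)" by (simp only: funpow_add o_apply)
    finally have "(\<sigma> ^^ j) 0 = (\<sigma> ^^ i) ((\<sigma> ^^ (j - i)) 0)" .
    then show ?thesis using that(2) funpow_inj_eq[OF inj, of i 0] by simp
  qed
  have "\<not> inj_on (\<lambda>j. (\<sigma> ^^ j) 0) {0..d}"
  proof (rule pigeonhole)
    have "(\<lambda>j. (\<sigma> ^^ j) 0) ` {0..d} \<subseteq> {0..<d}" using perm_pow_lt[OF s d] by auto
    then have "card ((\<lambda>j. (\<sigma> ^^ j) 0) ` {0..d}) \<le> d"
      using card_mono[OF finite_atLeastLessThan[of 0 d]] by simp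
    then show "card ((\<lambda>j. (\<sigma> ^^ j) 0) ` {0..d}) < card {0..d}" by simp
  qed
  then obtain i j where ij: "i \<in> {0..d}" "j \<in> {0..d}" "i \<noteq> j" "(\<sigma> ^^ i) 0 = (\<sigma> ^^ j) 0"
    unfolding inj_on_def by blast
  have ex: "\<exists>r. 0 < r \<and> r \<le> d \<and> (\<sigma> ^^ r) 0 = 0"
  proof (cases "i < j")
    case True then show ?thesis using bk[of i j] ij by (intro exI[of _ "j - i"]) auto
  next
    case False then show ?thesis using bk[of j i] ij by (intro exI[of _ "i - j"]) auto
  qed
  define r where "r = (LEAST r. 0 < r \<and> (\<sigma> ^^ r) 0 = 0)"
  obtain r0 where r0: "0 < r0" "r0 \<le> d" "(\<sigma> ^^ r0) 0 = 0" using ex by blast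
  have "0 < r \<and> (\<sigma> ^^ r) 0 = 0" unfolding r_def by (rule LeastI[of _ r0]) (use r0 in simp)
  then have r: "0 < r" "(\<sigma> ^^ r) 0 = 0" by auto
  have "r \<le> r0" unfolding r_def by (rule Least_le) (use r0 in simp)
  then have rle: "r \<le> d" using r0 by simp
  have rmin: "\<not> ((\<sigma> ^^ q) 0 = 0)" if "0 < q" "q < r" for q
  proof -
    have "\<not> (0 < q \<and> (\<sigma> ^^ q) 0 = 0)" using that(2) unfolding r_def by (rule not_less_Least)
    then show ?thesis using that(1) by simp
  qed
  have mult0: "(\<sigma> ^^ (r * q)) 0 = 0" for q
  proof (induction q)
    case 0 then show ?case by simp
  next
    case (Suc q)
    have "(\<sigma> ^^ (r * Suc q)) 0 = (\<sigma> ^^ r) ((\<sigma> ^^ (r * q)) 0)"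
      by (simp add: funpow_add mult_Suc_right)
    then show ?case using Suc r(2) by simp
  qed
  have per: "(\<sigma> ^^ n) 0 = (\<sigma> ^^ (n mod r)) 0" for n
  proof -
    have "(\<sigma> ^^ n) 0 = (\<sigma> ^^ (n mod r + r * (n div r))) 0" by simp
    also have "\<dots> = (\<sigma> ^^ (n mod r)) ((\<sigma> ^^ (r * (n div r))) 0)"
      by (simp only: funpow_add o_apply)
    finally have "(\<sigma> ^^ n) 0 = (\<sigma> ^^ (n mod r)) ((\<sigma> ^^ (r * (n div r))) 0)" .
    then show ?thesis using mult0 by simp
  qed
  have "{0..<d} \<subseteq> (\<lambda>j. (\<sigma> ^^ j) 0) ` {0..<r}"
  proof
    fix j assume "j \<in> {0..<d}"
    then obtain n where "(\<sigma> ^^ n) 0 = j" using cov by auto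
    then have "(\<sigma> ^^ (n mod r)) 0 = j" using per by simp
    moreover have "n mod r \<in> {0..<r}" using r(1) by simp
    ultimately show "j \<in> (\<lambda>j. (\<sigma> ^^ j) 0) ` {0..<r}" by blast
  qed
  then have "card {0..<d} \<le> card ((\<lambda>j. (\<sigma> ^^ j) 0) ` {0..<r})" by (intro card_mono) auto
  also have "\<dots> \<le> card {0..<r}" by (rule card_image_le) simp
  finally have "d \<le> r" by simp
  then have rd: "r = d" using rle by simp
  show "(\<sigma> ^^ d) 0 = 0" using r(2) rd by simp
  show "d dvd n" if "(\<sigma> ^^ n) 0 = 0" for n
  proof (rule ccontr)
    assume "\<not> d dvd n"
    then have "0 < n mod d" "n mod d < d" using d by (auto simp: dvd_eq_mod_eq_0)
    then show False using rmin[of "n mod d"] per[of n] that rd by simp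
  qed
  show "inj_on (\<lambda>j. (\<sigma> ^^ j) 0) {0..<d}"
  proof (rule inj_onI)
    fix i j assume i: "i \<in> {0..<d}" and j: "j \<in> {0..<d}" and e: "(\<sigma> ^^ i) 0 = (\<sigma> ^^ j) 0"
    show "i = j"
    proof (rule ccontr)
      assume "i \<noteq> j"
      then consider "i < j" | "j < i" by linarith
      then show False
      proof cases
        case 1
        have "j - i < d" using j by auto
        then show False using 1 bk[of i j] e rmin[of "j - i"] rd by auto
      next
        case 2
        have "i - j < d" using i by auto
        then show False using 2 bk[of j i] e rmin[of "i - j"] rd by auto
      qed
    qed
  qed
qed

lemma cycle_conj:
  assumes d: "d > 0" and g: "g \<in> Weq d m" and fc: "full_cycle_on (pts d m) g"
  shows "\<exists>a. is_unit_mod m a \<and> [a ^ d = 1] (mod rad' m) \<and> conj_in (Weq d m) g (Lrep d m a)"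
proof -
  obtain \<sigma> a bs where s: "\<sigma> permutes {0..<d}" and a: "is_unit_mod m a"
    and bs: "\<And>i. i < d \<Longrightarrow> bs i < m" and gd: "g = welem d m \<sigma> a bs"
    using Weq_E[OF g] by blast
  have m: "m > 0" using a by (rule is_unit_mod_pos)
  have reach: "\<exists>n. (g ^^ n) (x, i) = (y, j)" if "x < m" "i < d" "y < m" "j < d" for x i y j
  proof -
    have "{(g ^^ n) (x, i) |n. True} = pts d m" using fc that unfolding full_cycle_on_def by simp
    moreover have "(y, j) \<in> pts d m" using that by simp
    ultimately have "(y, j) \<in> {(g ^^ n) (x, i) |n. True}" by simp
    then obtain n where "(y, j) = (g ^^ n) (x, i)" by blast
    then show ?thesis by metis
  qed
  have gp: "(g ^^ n) (x, i) = ((a ^ n * x + Hs \<sigma> a bs n i) mod m, (\<sigma> ^^ n) i)"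
    if "x < m" "i < d" for x i n
    unfolding gd by (rule welem_pow[OF s that])
  have cov: "\<exists>n. (\<sigma> ^^ n) 0 = j" if jd: "j < d" for j
  proof -
    obtain n where "(g ^^ n) (0, 0) = (0, j)" using reach[of 0 0 0 j] m d jd by blast
    then show ?thesis using gp[of 0 0 n] m d by auto
  qed
  note oc = orbit_cycle[OF s d cov]
  define C where "C = Hs \<sigma> a bs d 0"
  have gpd: "(g ^^ (d * k)) (x, 0) = ((aff m (a ^ d) C ^^ k) x, 0)" if x: "x < m" for x k
  proof (induction k)
    case 0 then show ?case by simp
  next
    case (Suc k)
    let ?y = "(aff m (a ^ d) C ^^ k) x"
    have y: "?y < m" using x by (rule aff_lt)
    have "(g ^^ (d * Suc k)) (x, 0) = (g ^^ d) ((g ^^ (d * k)) (x, 0))"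
      by (simp add: funpow_add mult_Suc_right)
    also have "\<dots> = (g ^^ d) (?y, 0)" using Suc by simp
    also have "\<dots> = ((a ^ d * ?y + C) mod m, 0)"
      using gp[OF y d, of d] oc(1) by (simp add: C_def)
    also have "(a ^ d * ?y + C) mod m = aff m (a ^ d) C ?y" by (simp add: aff_def)
    finally show ?case by simp
  qed
  have T: "\<exists>k. (aff m (a ^ d) C ^^ k) x = z" if xz: "x < m" "z < m" for x z
  proof -
    obtain n where n: "(g ^^ n) (x, 0) = (z, 0)" using reach[of x 0 z 0] xz d by blast
    then have "(\<sigma> ^^ n) 0 = 0" using gp[of x 0 n] xz d by simp
    then have "d dvd n" using oc(2) by blast
    then obtain k where "n = d * k" by blast
    then show ?thesis using n gpd[of x k] xz by auto
  qed
  have HD: "coprime C m \<and> [a ^ d = 1] (mod rad' m)" using HD_nec[OF m T] by blast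
  define \<tau> where "\<tau> = (\<lambda>j. if j < d then (\<sigma> ^^ j) 0 else j)"
  have tp: "\<tau> permutes {0..<d}"
  proof (rule inj_on_imp_permutes)
    show "\<tau> ` {0..<d} \<subseteq> {0..<d}" using perm_pow_lt[OF s d] by (auto simp: \<tau>_def)
    show "inj_on \<tau> {0..<d}" using oc(3) unfolding inj_on_def \<tau>_def by auto
  qed (simp add: \<tau>_def)
  define c where "c = C mod m"
  have cu: "is_unit_mod m c" using HD m by (simp add: c_def is_unit_mod_def)
  define es where "es = (\<lambda>i. Hs \<sigma> a bs (inv \<tau> i) 0 mod m)"
  have est: "es (\<tau> j) = Hs \<sigma> a bs j 0 mod m" for j
    unfolding es_def using permutes_inverses(2)[OF tp] by simp
  define w where "w = welem d m \<tau> c es"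
  have wW: "w \<in> Weq d m" unfolding w_def by (rule WeqI[OF tp cu]) (simp add: es_def m)
  let ?L = "welem d m (rot d) a (beta m)"
  have eq: "g \<circ> w = w \<circ> ?L"
  proof
    fix p
    show "(g \<circ> w) p = (w \<circ> ?L) p"
    proof (cases "p \<in> pts d m")
      case False
      then show ?thesis by (simp add: gd w_def welem_out)
    next
      case True
      then obtain x j where p: "p = (x, j)" and x: "x < m" and j: "j < d" by (cases p) auto
      have tj: "\<tau> j = (\<sigma> ^^ j) 0" using j by (simp add: \<tau>_def)
      have tjd: "\<tau> j < d" using perm_lt[OF tp j] .
      have rj: "rot d j < d" using j by (simp add: rot_def)
      have G: "(g \<circ> w) p = ((a * ((c * x + es (\<tau> j)) mod m) + bs (\<sigma> (\<tau> j))) mod m, \<sigma> (\<tau> j))"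
        using p x j m tjd by (simp add: gd w_def welem_in)
      have W: "(w \<circ> ?L) p = ((c * ((a * x + beta m (rot d j)) mod m) + es (\<tau> (rot d j))) mod m, \<tau> (rot d j))"
        using p x j m rj by (simp add: w_def welem_in)
      have K: "\<sigma> (\<tau> j) = \<tau> (rot d j) \<and>
        [c * beta m (rot d j) + es (\<tau> (rot d j)) = a * es (\<tau> j) + bs (\<sigma> (\<tau> j))] (mod m)"
      proof (cases "Suc j < d")
        case True
        have r: "rot d j = Suc j" using True by (simp add: rot_def)
        have st: "\<sigma> (\<tau> j) = (\<sigma> ^^ Suc j) 0" using tj by simp
        have t1: "\<tau> (Suc j) = (\<sigma> ^^ Suc j) 0" using True by (simp add: \<tau>_def)
        have "[c * 0 + (a * Hs \<sigma> a bs j 0 + bs ((\<sigma> ^^ Suc j) 0)) mod m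
              = a * (Hs \<sigma> a bs j 0 mod m) + bs ((\<sigma> ^^ Suc j) 0)] (mod m)"
          unfolding cong_def by simp (metis mod_add_left_eq mod_mult_right_eq)
        then show ?thesis using r st t1 est[of j] est[of "Suc j"]
          by (simp add: beta_def)
      next
        case False
        then have jd: "Suc j = d" using j by simp
        have r: "rot d j = 0" using jd by (simp add: rot_def)
        have t0: "\<tau> 0 = 0" using d by (simp add: \<tau>_def)
        have e0: "es 0 = 0" using est[of 0] t0 by simp
        have st: "\<sigma> (\<tau> j) = 0" using tj oc(1) jd by (metis funpow.simps(2) comp_apply)
        have Cd: "C = a * Hs \<sigma> a bs j 0 + bs 0"
          unfolding C_def using jd[symmetric] oc(1) by simp
        have "[c * (1 mod m) + 0 = a * (Hs \<sigma> a bs j 0 mod m) + bs 0] (mod m)"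
          unfolding cong_def c_def Cd by simp (metis mod_add_left_eq mod_mult_right_eq)
        then show ?thesis using r st t0 e0 est[of j] by (simp add: beta_def)
      qed
      have "(c * ((a * x + beta m (rot d j)) mod m) + es (\<tau> (rot d j))) mod m
          = (a * ((c * x + es (\<tau> j)) mod m) + bs (\<sigma> (\<tau> j))) mod m"
        using K by (intro comp_eq) blast
      then show ?thesis unfolding G W using K by simp
    qed
  qed
  have "conj_in (Weq d m) g ?L" by (rule conj_swap[OF wW eq])
  then show ?thesis using a HD Lrep_eq[OF d] by auto
qed

lemma even_lt_2k: "even (i::nat) \<Longrightarrow> i < 2 * k \<Longrightarrow> Suc i < 2 * k"
  by presburger

lemma pairswap_lt: "i < 2 * k \<Longrightarrow> pairswap k i < 2 * k"
  unfolding pairswap_def using even_lt_2k[of i k] by auto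

lemma pairswap_invol: "pairswap k (pairswap k i) = i"
proof (cases "i < 2 * k")
  case False then show ?thesis by (simp add: pairswap_def)
next
  case True
  show ?thesis
  proof (cases "even i")
    case True
    then have "Suc i < 2 * k" using \<open>i < 2 * k\<close> by (rule even_lt_2k)
    then show ?thesis using True \<open>i < 2 * k\<close> by (simp add: pairswap_def)
  next
    case False
    then have i1: "i \<ge> 1" by (cases i) auto
    have "even (i - 1)" using False i1 by simp
    then show ?thesis using False \<open>i < 2 * k\<close> i1 by (simp add: pairswap_def)
  qed
qed

lemma pairswap_fix: "pairswap k i = i \<longleftrightarrow> 2 * k \<le> i"
proof (cases "even i")
  case True then show ?thesis by (simp add: pairswap_def)
next
  case False
  then have i1: "i \<ge> 1" by (cases i) auto
  then show ?thesis using False by (auto simp: pairswap_def)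
qed

lemma pairswap_permutes:
  assumes "2 * k \<le> d" shows "pairswap k permutes {0..<d}"
proof (rule inj_on_imp_permutes)
  show "pairswap k ` {0..<d} \<subseteq> {0..<d}"
  proof
    fix y assume "y \<in> pairswap k ` {0..<d}"
    then obtain i where i: "i < d" "y = pairswap k i" by auto
    show "y \<in> {0..<d}"
    proof (cases "i < 2 * k")
      case True then show ?thesis using pairswap_lt[OF True] assms i by simp
    next
      case False then show ?thesis using i by (simp add: pairswap_def)
    qed
  qed
  show "inj_on (pairswap k) {0..<d}" by (metis inj_onI pairswap_invol)
  fix i assume "d \<le> i" then show "pairswap k i = i" using assms by (simp add: pairswap_def)
qed

definition bsI :: "nat \<Rightarrow> (nat \<times> nat) list \<Rightarrow> nat \<Rightarrow> nat" where
  "bsI k t = (\<lambda>i. if i < 2 * k then 0 else snd (t ! (i - 2 * k)))"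

lemma Irep_def': "Irep d m k a t = welem d m (pairswap k) a (bsI k t)"
  by (simp add: Irep_def bsI_def)

lemma hol_inv_snd: "hol_involution m h \<Longrightarrow> snd h < m"
  by (auto simp: hol_involution_def hol_def)

lemma Iidx_D:
  assumes "(k, a, t) \<in> Iidx d m R"
  shows "2 * k \<le> d" "is_unit_mod m a" "[a ^ 2 = 1] (mod m)" "length t = d - 2 * k"
    "set t \<subseteq> R" "\<And>h. h \<in> set t \<Longrightarrow> fst h = a" "sorted_wrt lex_le t"
  using assms by (auto simp: Iidx_def)

lemma Irep_in_Weq:
  assumes m: "m > 0" and R_inv: "\<forall>h\<in>R. hol_involution m h" and kat: "(k, a, t) \<in> Iidx d m R"
  shows "Irep d m k a t \<in> Weq d m"
  unfolding Irep_def'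
proof (rule WeqI[OF pairswap_permutes[OF Iidx_D(1)[OF kat]] Iidx_D(2)[OF kat]])
  fix i assume i: "i < d"
  show "bsI k t i < m"
  proof (cases "i < 2 * k")
    case True then show ?thesis using m by (simp add: bsI_def)
  next
    case False
    then have "i - 2 * k < length t" using i Iidx_D(4)[OF kat] by simp
    then have "t ! (i - 2 * k) \<in> R" using Iidx_D(5)[OF kat] nth_mem by blast
    then show ?thesis using False R_inv hol_inv_snd by (simp add: bsI_def)
  qed
qed

lemma Irep_invol:
  assumes m: "m > 0" and R_inv: "\<forall>h\<in>R. hol_involution m h" and kat: "(k, a, t) \<in> Iidx d m R"
  shows "involution (Irep d m k a t)"
  unfolding involution_def
proof
  fix p
  let ?I = "welem d m (pairswap k) a (bsI k t)"
  have ps: "pairswap k permutes {0..<d}" using pairswap_permutes[OF Iidx_D(1)[OF kat]] .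
  show "(Irep d m k a t \<circ> Irep d m k a t) p = id p"
  proof (cases "p \<in> pts d m")
    case False then show ?thesis by (simp add: Irep_def' welem_out)
  next
    case True
    then obtain x i where p: "p = (x, i)" and x: "x < m" and i: "i < d" by (cases p) auto
    have pi: "pairswap k i < d" using perm_lt[OF ps i] .
    have "(Irep d m k a t \<circ> Irep d m k a t) p =
      ((a * ((a * x + bsI k t (pairswap k i)) mod m) + bsI k t i) mod m, i)"
      using p x i pi m by (simp add: Irep_def' welem_in pairswap_invol)
    also have "(a * ((a * x + bsI k t (pairswap k i)) mod m) + bsI k t i) mod m = x"
    proof (cases "i < 2 * k")
      case True
      have "(a * ((a * x + bsI k t (pairswap k i)) mod m) + bsI k t i) mod m = (a ^ 2 * x) mod m"
        using True pairswap_lt[OF True] by (simp add: bsI_def mod_mult_right_eq power2_eq_square mult.assoc)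
      also have "\<dots> = (1 * x) mod m" using cong_mult[OF Iidx_D(3)[OF kat] cong_refl[of x]] by (simp add: cong_def)
      finally show ?thesis using x by simp
    next
      case False
      then have fx: "pairswap k i = i" by (simp add: pairswap_fix)
      have il: "i - 2 * k < length t" using i False Iidx_D(4)[OF kat] by simp
      define h where "h = t ! (i - 2 * k)"
      have hR: "h \<in> R" unfolding h_def using il Iidx_D(5)[OF kat] nth_mem by blast
      have fh: "fst h = a" unfolding h_def using il Iidx_D(6)[OF kat] nth_mem by blast
      have "hol_involution m h" using hR R_inv by blast
      then have "lam m (fst h) (snd h) (lam m (fst h) (snd h) x) = x" using x by (simp add: hol_involution_def)
      then show ?thesis using fx False fh by (simp add: bsI_def lam_def h_def)
    qed
    finally show ?thesis using p by simp
  qed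
qed

lemma hol_conj_refl:
  assumes m: "m > 0" shows "hol_conj m h h"
  unfolding hol_conj_def
proof (rule bexI[of _ "(1 mod m, 0)"])
  show "(1 mod m, 0) \<in> hol m" using m
    by (cases "m = 1") (auto simp: hol_def is_unit_mod_def)
  show "case (1 mod m, 0) of (c, e) \<Rightarrow> \<forall>x<m. lam m c e (lam m (fst h) (snd h) x) = lam m (fst h) (snd h) (lam m c e x)"
    by (simp add: lam_def mod_mult_left_eq)
qed

lemma R_unique:
  assumes m: "m > 0" and R_inv: "\<forall>h\<in>R. hol_involution m h"
    and R_rep: "\<forall>h. hol_involution m h \<longrightarrow> (\<exists>!r. r \<in> R \<and> hol_conj m r h)"
    and r: "r \<in> R" and r': "r' \<in> R" and c: "hol_conj m r r'"
  shows "r = r'"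
proof -
  have "hol_involution m r'" using r' R_inv by blast
  then have "\<exists>!r0. r0 \<in> R \<and> hol_conj m r0 r'" using R_rep by blast
  moreover have "r' \<in> R \<and> hol_conj m r' r'" using r' hol_conj_refl[OF m] by blast
  ultimately show ?thesis using r c by blast
qed

lemma lex_le_eq: "lex_le = (\<le>)"
  by (auto simp: lex_le_def less_eq_prod_def fun_eq_iff)

lemma Irep_unique:
  assumes d: "d > 0" and m: "m > 0" and R_inv: "\<forall>h\<in>R. hol_involution m h"
    and R_rep: "\<forall>h. hol_involution m h \<longrightarrow> (\<exists>!r. r \<in> R \<and> hol_conj m r h)"
    and kat: "(k, a, t) \<in> Iidx d m R" and kat': "(k', a', t') \<in> Iidx d m R"
    and cj: "conj_in (Weq d m) (Irep d m k a t) (Irep d m k' a' t')"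
  shows "(k, a, t) = (k', a', t')"
proof -
  obtain w where w: "w \<in> Weq d m" and eq: "Irep d m k' a' t' \<circ> w = w \<circ> Irep d m k a t"
    using cj unfolding conj_in_def by blast
  obtain \<tau> c es where t: "\<tau> permutes {0..<d}" and cu: "is_unit_mod m c"
    and es: "\<And>i. i < d \<Longrightarrow> es i < m" and wd: "w = welem d m \<tau> c es"
    using Weq_E[OF w] by blast
  have ps: "pairswap k permutes {0..<d}" using pairswap_permutes[OF Iidx_D(1)[OF kat]] .
  have ps': "pairswap k' permutes {0..<d}" using pairswap_permutes[OF Iidx_D(1)[OF kat']] .
  have aa: "a = a'"
    by (rule mult_invariant[OF d ps ps' t Iidx_D(2)[OF kat] Iidx_D(2)[OF kat'] cu])
       (use eq wd in \<open>simp add: Irep_def'\<close>)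
  have pt: "(a' * ((c * x + es (\<tau> j)) mod m) + bsI k' t' (pairswap k' (\<tau> j))) mod m
            = (c * ((a * x + bsI k t (pairswap k j)) mod m) + es (\<tau> (pairswap k j))) mod m
         \<and> pairswap k' (\<tau> j) = \<tau> (pairswap k j)" if x: "x < m" and j: "j < d" for x j
  proof -
    have "(Irep d m k' a' t' \<circ> w) (x, j) = (w \<circ> Irep d m k a t) (x, j)" using eq by simp
    then show ?thesis using x j m perm_lt[OF t j] perm_lt[OF ps j]
      by (auto simp add: Irep_def' wd welem_in)
  qed
  have tinj: "inj_on \<tau> {0..<d}" using permutes_inj[OF t] by (simp add: inj_on_def)
  have fixiff: "2 * k \<le> j \<longleftrightarrow> 2 * k' \<le> \<tau> j" if j: "j < d" for j
  proof -
    have e: "pairswap k' (\<tau> j) = \<tau> (pairswap k j)" using pt[OF m j] by blast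
    have pj: "pairswap k j < d" using perm_lt[OF ps j] .
    have "pairswap k j = j \<longleftrightarrow> \<tau> (pairswap k j) = \<tau> j"
      using tinj pj j by (auto simp: inj_on_def)
    moreover have "pairswap k j = j \<longleftrightarrow> 2 * k \<le> j" by (rule pairswap_fix)
    moreover have "pairswap k' (\<tau> j) = \<tau> j \<longleftrightarrow> 2 * k' \<le> \<tau> j" by (rule pairswap_fix)
    ultimately show ?thesis using e by argo
  qed
  have k1: "2 * k \<le> 2 * k'"
  proof -
    have "card {0..<2 * k} \<le> card {0..<2 * k'}"
    proof (rule card_inj_on_le)
      show "inj_on \<tau> {0..<2 * k}" using tinj Iidx_D(1)[OF kat] by (auto simp: inj_on_def)
      show "\<tau> ` {0..<2 * k} \<subseteq> {0..<2 * k'}"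
      proof (rule image_subsetI)
        fix j assume j: "j \<in> {0..<2 * k}"
        then have "j < d" using Iidx_D(1)[OF kat] by simp
        then show "\<tau> j \<in> {0..<2 * k'}" using fixiff[of j] j by simp
      qed
    qed simp
    then show ?thesis by simp
  qed
  have k2: "d - 2 * k \<le> d - 2 * k'"
  proof -
    have "card {2 * k..<d} \<le> card {2 * k'..<d}"
    proof (rule card_inj_on_le)
      show "inj_on \<tau> {2 * k..<d}" using tinj by (auto simp: inj_on_def)
      show "\<tau> ` {2 * k..<d} \<subseteq> {2 * k'..<d}"
      proof (rule image_subsetI)
        fix j assume j: "j \<in> {2 * k..<d}"
        then have "j < d" by simp
        then show "\<tau> j \<in> {2 * k'..<d}" using fixiff[of j] j perm_lt[OF t, of j] by simp
      qed
    qed simp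
    then show ?thesis by simp
  qed
  have kk: "k = k'" using k1 k2 Iidx_D(1)[OF kat] Iidx_D(1)[OF kat'] by linarith
  define n where "n = d - 2 * k"
  have lt: "length t = n" "length t' = n" using Iidx_D(4)[OF kat] Iidx_D(4)[OF kat'] kk by (auto simp: n_def)
  define \<pi> where "\<pi> = (\<lambda>j. if j < n then \<tau> (j + 2 * k) - 2 * k else j)"
  have tr: "2 * k \<le> \<tau> (j + 2 * k) \<and> \<tau> (j + 2 * k) < d" if "j < n" for j
    using fixiff[of "j + 2 * k"] perm_lt[OF t, of "j + 2 * k"] that kk by (simp add: n_def)
  have pp: "\<pi> permutes {..<n}"
  proof -
    have "\<pi> permutes {0..<n}"
    proof (rule inj_on_imp_permutes)
      show "\<pi> ` {0..<n} \<subseteq> {0..<n}"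
      proof (rule image_subsetI)
        fix j assume "j \<in> {0..<n}"
        then have j: "j < n" by simp
        have "\<tau> (j + 2 * k) - 2 * k < d - 2 * k" using tr[OF j] diff_less_mono by blast
        then show "\<pi> j \<in> {0..<n}" using j unfolding \<pi>_def n_def by simp
      qed
      show "inj_on \<pi> {0..<n}"
      proof (rule inj_onI)
        fix i j assume i: "i \<in> {0..<n}" and j: "j \<in> {0..<n}" and e: "\<pi> i = \<pi> j"
        have "\<tau> (i + 2 * k) - 2 * k = \<tau> (j + 2 * k) - 2 * k" using e i j by (simp add: \<pi>_def)
        then have "\<tau> (i + 2 * k) = \<tau> (j + 2 * k)" using tr[of i] tr[of j] i j eq_diff_iff by auto
        moreover have "i + 2 * k < d" "j + 2 * k < d" using i j by (auto simp: n_def)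
        ultimately have "i + 2 * k = j + 2 * k" using tinj unfolding inj_on_def by (meson atLeastLessThan_iff zero_le)
        then show "i = j" by simp
      qed
    qed (simp add: \<pi>_def)
    then show ?thesis by (simp add: atLeast0LessThan)
  qed
  have ent: "t ! j = t' ! (\<pi> j)" if j: "j < n" for j
  proof -
    define i where "i = j + 2 * k"
    have id: "i < d" using j by (simp add: i_def n_def)
    have fi: "pairswap k i = i" by (simp add: pairswap_fix i_def)
    have ti: "2 * k' \<le> \<tau> i" "\<tau> i < d" using tr[OF j] kk unfolding i_def by simp_all
    have fti: "pairswap k' (\<tau> i) = \<tau> i" using ti by (simp add: pairswap_fix)
    have "\<pi> j \<in> {..<n}" by (rule permutes_in_image[OF pp, THEN iffD2]) (use j in simp)
    then have pj: "\<pi> j < n" by simp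
    have pje: "\<tau> i - 2 * k' = \<pi> j" using j kk by (simp add: \<pi>_def i_def)
    have m1: "t ! j \<in> set t" using j lt by simp
    have m2: "t' ! (\<pi> j) \<in> set t'" using pj lt by simp
    have tjR: "t ! j \<in> R" using m1 Iidx_D(5)[OF kat] by (rule subsetD[rotated])
    have tpR: "t' ! (\<pi> j) \<in> R" using m2 Iidx_D(5)[OF kat'] by (rule subsetD[rotated])
    have f1: "fst (t ! j) = a" by (rule Iidx_D(6)[OF kat m1])
    have f2: "fst (t' ! (\<pi> j)) = a" using Iidx_D(6)[OF kat' m2] aa by simp
    have b1: "bsI k t i = snd (t ! j)" by (simp add: bsI_def i_def)
    have b2: "bsI k' t' (\<tau> i) = snd (t' ! (\<pi> j))" using ti pje by (simp add: bsI_def)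
    have "hol_conj m (t ! j) (t' ! (\<pi> j))"
      unfolding hol_conj_def
    proof (rule bexI[of _ "(c, es (\<tau> i))"])
      show "(c, es (\<tau> i)) \<in> hol m" using cu es[OF ti(2)] by (simp add: hol_def)
      show "case (c, es (\<tau> i)) of (c, e) \<Rightarrow> \<forall>x<m. lam m c e (lam m (fst (t ! j)) (snd (t ! j)) x) =
          lam m (fst (t' ! (\<pi> j))) (snd (t' ! (\<pi> j))) (lam m c e x)"
      proof (simp, intro allI impI)
        fix x assume x: "x < m"
        show "lam m c (es (\<tau> i)) (lam m (fst (t ! j)) (snd (t ! j)) x) =
          lam m (fst (t' ! (\<pi> j))) (snd (t' ! (\<pi> j))) (lam m c (es (\<tau> i)) x)"
          using pt[OF x id] fi fti b1 b2 f1 f2 aa by (simp add: lam_def)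
      qed
    qed
    then show ?thesis using R_unique[OF m R_inv R_rep tjR tpR] by blast
  qed
  have "t = permute_list \<pi> t'"
    by (rule nth_equalityI) (use lt ent pp in \<open>simp_all add: permute_list_nth\<close>)
  then have ms: "mset t = mset t'" using pp lt by simp
  have s1: "sorted t" using Iidx_D(7)[OF kat] by (simp add: lex_le_eq)
  have s2: "sorted t'" using Iidx_D(7)[OF kat'] by (simp add: lex_le_eq)
  have "sort t' = t" using ms s1 by (rule properties_for_sort)
  moreover have "sort t' = t'" using s2 by (rule properties_for_sort[OF refl])
  ultimately have "t = t'" by simp
  then show ?thesis using kk aa by simp
qed

lemma mod_lin2: "(a * ((b * x + B) mod m) + C) mod m = (a * b * x + (a * B + C)) mod (m::nat)"
proof -
  have "(a * ((b * x + B) mod m) + C) mod m = (a * (b * x + B) + C) mod m"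
    by (metis mod_add_left_eq mod_mult_right_eq)
  also have "a * (b * x + B) + C = a * b * x + (a * B + C)" by (simp add: algebra_simps)
  finally show ?thesis .
qed

lemma mod_lin1: "(a * (X mod m) + C) mod m = (a * X + C) mod (m::nat)"
  by (metis mod_add_left_eq mod_mult_right_eq)

lemma trans_conj:
  assumes m: "m > 0" and hr: "hol_involution m r" and hc: "hol_conj m r (a, b)"
    and a: "is_unit_mod m a" and b: "b < m"
  shows "fst r = a \<and> (\<exists>e<m. [snd r + e = a * e + b] (mod m))"
proof (cases "m = 1")
  case True
  have "fst r < m" using hr by (auto simp: hol_involution_def hol_def is_unit_mod_def)
  then show ?thesis using True a by (auto simp: is_unit_mod_def cong_def intro: exI[of _ 0])
next
  case False
  then have m1: "m > 1" using m by simp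
  obtain ra rb where r: "r = (ra, rb)" by (cases r)
  have ra: "ra < m" and rb: "rb < m" using hr r by (auto simp: hol_involution_def hol_def is_unit_mod_def)
  obtain c e' where ce: "(c, e') \<in> hol m"
    and H: "\<And>x. x < m \<Longrightarrow> lam m c e' (lam m ra rb x) = lam m a b (lam m c e' x)"
    using hc r unfolding hol_conj_def by auto
  have cu: "coprime c m" and e': "e' < m" using ce by (auto simp: hol_def is_unit_mod_def)
  have H0: "[c * rb + e' = a * e' + b] (mod m)"
    using H[of 0] m rb e' by (simp add: lam_def cong_def)
  have "(c * ((ra + rb) mod m) + e') mod m = (a * ((c + e') mod m) + b) mod m"
    using H[of 1] m1 by (simp add: lam_def)
  then have "(c * (ra + rb) + e') mod m = (a * (c + e') + b) mod m" by (simp only: mod_lin1)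
  moreover have "c * (ra + rb) + e' = c * ra + (c * rb + e')" by (simp add: algebra_simps)
  moreover have "a * (c + e') + b = a * c + (a * e' + b)" by (simp add: algebra_simps)
  ultimately have H1: "[c * ra + (c * rb + e') = a * c + (a * e' + b)] (mod m)"
    by (simp only: cong_def)
  have "[c * ra + (c * rb + e') = a * c + (c * rb + e')] (mod m)"
    using H1 cong_add[OF cong_refl[of "a * c"] H0] cong_sym cong_trans by blast
  then have "[c * ra = a * c] (mod m)" by (simp add: cong_add_rcancel_nat)
  then have "[c * ra = c * a] (mod m)" by (simp add: mult.commute)
  then have "[ra = a] (mod m)" using cong_mult_lcancel_nat[OF cu] by simp
  then have raa: "ra = a" using ra a by (simp add: cong_def is_unit_mod_def)
  have "lam m ra rb (lam m ra rb 0) = 0" using hr r m by (simp add: hol_involution_def)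
  then have rinv: "[a * rb + rb = 0] (mod m)" using rb raa by (simp add: lam_def cong_def)
  define c1 where "c1 = (if odd c then c else c + m)"
  have "odd c1"
  proof (cases "odd c")
    case True then show ?thesis by (simp add: c1_def)
  next
    case False
    have "odd m"
    proof
      assume "even m"
      then have "2 dvd gcd c m" using False by (intro gcd_greatest) auto
      moreover have "gcd c m = 1" using cu by (simp add: coprime_iff_gcd_eq_1)
      ultimately show False by simp
    qed
    then show ?thesis using False by (simp add: c1_def)
  qed
  then obtain q where q: "c1 = 2 * q + 1" by (metis oddE)
  have cc1: "[c = 2 * q + 1] (mod m)" unfolding q[symmetric] c1_def by (simp add: cong_def)
  define h where "h = q * rb"
  have key: "[c * rb + a * h = rb + h] (mod m)"
  proof -
    have "[c * rb + a * h = (2 * q + 1) * rb + a * h] (mod m)"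
      by (intro cong_add cong_mult cc1 cong_refl)
    also have "(2 * q + 1) * rb + a * h = (rb + h) + q * (a * rb + rb)"
      by (simp add: h_def algebra_simps)
    also have "[(rb + h) + q * (a * rb + rb) = (rb + h) + q * 0] (mod m)"
      by (intro cong_add cong_mult cong_refl rinv)
    finally show ?thesis by simp
  qed
  define e where "e = (e' + h) mod m"
  have ee: "[e = e' + h] (mod m)" by (simp add: e_def cong_def)
  have "[a * e + b = a * (e' + h) + b] (mod m)" by (intro cong_add cong_mult cong_refl ee)
  also have "a * (e' + h) + b = (a * e' + b) + a * h" by (simp add: algebra_simps)
  also have "[(a * e' + b) + a * h = (c * rb + e') + a * h] (mod m)"
    by (intro cong_add cong_refl cong_sym[OF H0])
  also have "(c * rb + e') + a * h = e' + (c * rb + a * h)" by simp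
  also have "[e' + (c * rb + a * h) = e' + (rb + h)] (mod m)" by (intro cong_add cong_refl key)
  also have "e' + (rb + h) = rb + (e' + h)" by simp
  also have "[rb + (e' + h) = rb + e] (mod m)" by (intro cong_add cong_refl cong_sym[OF ee])
  finally have "[rb + e = a * e + b] (mod m)" by (rule cong_sym)
  moreover have "e < m" using m by (simp add: e_def)
  ultimately show ?thesis using r raa by auto
qed

lemma invol_conj:
  assumes d: "d > 0" and R_inv: "\<forall>h\<in>R. hol_involution m h"
    and R_rep: "\<forall>h. hol_involution m h \<longrightarrow> (\<exists>!r. r \<in> R \<and> hol_conj m r h)"
    and g: "g \<in> Weq d m" and gi: "involution g"
  shows "\<exists>(k, a, t)\<in>Iidx d m R. conj_in (Weq d m) g (Irep d m k a t)"
proof -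
  obtain \<sigma> a bs where s: "\<sigma> permutes {0..<d}" and a: "is_unit_mod m a"
    and bs: "\<And>i. i < d \<Longrightarrow> bs i < m" and gd: "g = welem d m \<sigma> a bs"
    using Weq_E[OF g] by blast
  have m: "m > 0" using a by (rule is_unit_mod_pos)
  have gg: "g (g p) = p" for p using gi unfolding involution_def by (metis comp_apply id_apply)
  have gg2: "(a * ((a * x + bs (\<sigma> i)) mod m) + bs (\<sigma> (\<sigma> i))) mod m = x \<and> \<sigma> (\<sigma> i) = i"
    if xi: "x < m" "i < d" for x i
  proof -
    have si: "\<sigma> i < d" using perm_lt[OF s xi(2)] .
    have e1: "g (x, i) = ((a * x + bs (\<sigma> i)) mod m, \<sigma> i)" using xi by (simp add: gd welem_in)
    have e2: "g ((a * x + bs (\<sigma> i)) mod m, \<sigma> i) = ((a * ((a * x + bs (\<sigma> i)) mod m) + bs (\<sigma> (\<sigma> i))) mod m, \<sigma> (\<sigma> i))"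
      using si m by (simp add: gd welem_in)
    have "((a * ((a * x + bs (\<sigma> i)) mod m) + bs (\<sigma> (\<sigma> i))) mod m, \<sigma> (\<sigma> i)) = (x, i)"
      using gg[of "(x, i)"] unfolding e1 e2 .
    then show ?thesis unfolding prod.inject .
  qed
  have ss: "\<sigma> (\<sigma> i) = i" if "i < d" for i using gg2[OF m that] by blast
  have first: "(a * ((a * x + bs (\<sigma> i)) mod m) + bs i) mod m = x" if xi: "x < m" "i < d" for x i
  proof -
    have "(a * ((a * x + bs (\<sigma> i)) mod m) + bs (\<sigma> (\<sigma> i))) mod m = x" using gg2[OF xi] by (rule conjunct1)
    then show ?thesis unfolding ss[OF xi(2)] .
  qed
  have pairrel: "[a * bs (\<sigma> i) + bs i = 0] (mod m)" if i: "i < d" for i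
    using first[OF m i] bs[OF perm_lt[OF s i]] by (simp add: cong_def)
  have a2: "[a ^ 2 = 1] (mod m)"
  proof (cases "m = 1")
    case True then show ?thesis by (simp add: cong_def)
  next
    case False
    then have m1: "1 < m" using m by simp
    have "(a * (a * 1 + bs (\<sigma> 0)) + bs 0) mod m = 1"
      using first[OF m1 d] by (simp only: mod_lin1)
    moreover have "a * (a * 1 + bs (\<sigma> 0)) + bs 0 = a * a + (a * bs (\<sigma> 0) + bs 0)" by (simp add: algebra_simps)
    ultimately have "(a * a + (a * bs (\<sigma> 0) + bs 0)) mod m = 1" by (simp only:)
    then have "[a * a + (a * bs (\<sigma> 0) + bs 0) = 1 + 0] (mod m)" using m1 by (simp add: cong_def)
    moreover have "[a * bs (\<sigma> 0) + bs 0 = 0] (mod m)" by (rule pairrel[OF d])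
    ultimately have "[a * a + (a * bs (\<sigma> 0) + bs 0) = 1 + (a * bs (\<sigma> 0) + bs 0)] (mod m)"
      by (meson cong_add cong_refl cong_sym cong_trans)
    then have "[a * a = 1] (mod m)" by (simp only: cong_add_rcancel_nat)
    then show ?thesis by (simp add: power2_eq_square)
  qed
  have fixinv: "hol_involution m (a, bs i)" if i: "i < d" and f: "\<sigma> i = i" for i
    unfolding hol_involution_def using a bs[OF i] first[of _ i] i f by (simp add: hol_def lam_def)
  define P where "P = {i. i < d \<and> i < \<sigma> i}"
  define Q where "Q = {i. i < d \<and> \<sigma> i < i}"
  define Fs where "Fs = {i. i < d \<and> \<sigma> i = i}"
  define k where "k = card P"
  have finP: "finite P" "finite Q" "finite Fs" by (auto simp: P_def Q_def Fs_def)
  have sP: "\<sigma> ` P = Q"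
  proof
    show "\<sigma> ` P \<subseteq> Q" using ss perm_lt[OF s] by (auto simp: P_def Q_def)
    show "Q \<subseteq> \<sigma> ` P"
    proof
      fix j assume j: "j \<in> Q"
      then have "\<sigma> j \<in> P" "\<sigma> (\<sigma> j) = j" using ss perm_lt[OF s] by (auto simp: P_def Q_def)
      then show "j \<in> \<sigma> ` P" by (metis image_eqI)
    qed
  qed
  have cardQ: "card Q = k"
  proof -
    have "inj_on \<sigma> P" using permutes_inj[OF s] by (simp add: inj_on_def)
    then show ?thesis using sP by (metis card_image k_def)
  qed
  have union: "{0..<d} = P \<union> Q \<union> Fs" by (auto simp: P_def Q_def Fs_def)
  have "card {0..<d} = card (P \<union> Q) + card Fs"
    unfolding union by (rule card_Un_disjoint) (auto simp: P_def Q_def Fs_def finP)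
  also have "card (P \<union> Q) = card P + card Q"
    by (rule card_Un_disjoint) (auto simp: P_def Q_def finP)
  finally have dsum: "d = 2 * k + card Fs" using cardQ k_def by simp
  define pl where "pl = sorted_list_of_set P"
  have pl: "length pl = k" "set pl = P" "distinct pl"
    using finP by (auto simp: pl_def k_def)
  define rep where "rep = (\<lambda>i. THE r. r \<in> R \<and> hol_conj m r (a, bs i))"
  have repR: "rep i \<in> R \<and> hol_conj m (rep i) (a, bs i)" if i: "i \<in> Fs" for i
  proof -
    have "hol_involution m (a, bs i)" using i fixinv by (simp add: Fs_def)
    then have "\<exists>!r. r \<in> R \<and> hol_conj m r (a, bs i)" using R_rep by blast
    then show ?thesis unfolding rep_def by (rule theI')
  qed
  have repT: "fst (rep i) = a \<and> (\<exists>e<m. [snd (rep i) + e = a * e + bs i] (mod m))" if i: "i \<in> Fs" for i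
  proof (rule trans_conj[OF m _ _ a])
    show "hol_involution m (rep i)" using repR[OF i] R_inv by blast
    show "hol_conj m (rep i) (a, bs i)" using repR[OF i] by blast
    show "bs i < m" using i bs by (simp add: Fs_def)
  qed
  define fl where "fl = sort_key rep (sorted_list_of_set Fs)"
  have fl: "length fl = card Fs" "set fl = Fs" "distinct fl"
    using finP by (auto simp: fl_def)
  define t where "t = map rep fl"
  define \<tau> where "\<tau> = (\<lambda>j. if j < 2 * k then (if even j then pl ! (j div 2) else \<sigma> (pl ! (j div 2)))
                         else if j < d then fl ! (j - 2 * k) else j)"
  have plP: "pl ! l \<in> P" if "l < k" for l using that pl nth_mem by blast
  have flF: "fl ! l \<in> Fs" if "l < d - 2 * k" for l using that fl dsum nth_mem by (metis add_diff_cancel_left')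
  have tp: "\<tau> permutes {0..<d}"
  proof (rule surj_on_imp_permutes)
    show "\<tau> ` {0..<d} = {0..<d}"
    proof
      show "\<tau> ` {0..<d} \<subseteq> {0..<d}"
      proof (rule image_subsetI)
        fix j assume j: "j \<in> {0..<d}"
        show "\<tau> j \<in> {0..<d}"
        proof (cases "j < 2 * k")
          case True
          then have "j div 2 < k" by simp
          then have "pl ! (j div 2) \<in> P" by (rule plP)
          then show ?thesis using True perm_lt[OF s] by (auto simp: \<tau>_def P_def)
        next
          case False
          then have "j - 2 * k < d - 2 * k" using j by auto
          then have "fl ! (j - 2 * k) \<in> Fs" by (rule flF)
          then show ?thesis using False j by (auto simp: \<tau>_def Fs_def)
        qed
      qed
      show "{0..<d} \<subseteq> \<tau> ` {0..<d}"
      proof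
        fix i assume i: "i \<in> {0..<d}"
        then have "i \<in> P \<or> i \<in> Q \<or> i \<in> Fs" using union by blast
        then show "i \<in> \<tau> ` {0..<d}"
        proof (elim disjE)
          assume "i \<in> P"
          then obtain l where l: "l < k" "pl ! l = i" using pl by (metis in_set_conv_nth)
          have "\<tau> (2 * l) = i" using l by (simp add: \<tau>_def)
          moreover have "2 * l < d" using l dsum by simp
          ultimately show ?thesis by (metis atLeastLessThan_iff image_eqI zero_le)
        next
          assume iQ: "i \<in> Q"
          then obtain p where p: "p \<in> P" "\<sigma> p = i" using sP by blast
          then obtain l where l: "l < k" "pl ! l = p" using pl by (metis in_set_conv_nth)
          have "\<tau> (2 * l + 1) = i" using l p by (simp add: \<tau>_def)
          moreover have "2 * l + 1 < d" using l dsum by simp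
          ultimately show ?thesis by (metis atLeastLessThan_iff image_eqI zero_le)
        next
          assume "i \<in> Fs"
          then obtain l where l: "l < card Fs" "fl ! l = i" using fl by (metis in_set_conv_nth)
          have "\<tau> (2 * k + l) = i" using l dsum by (simp add: \<tau>_def)
          moreover have "2 * k + l < d" using l dsum by simp
          ultimately show ?thesis by (metis atLeastLessThan_iff image_eqI zero_le)
        qed
      qed
    qed
  qed (simp add: \<tau>_def dsum)
  have k2d: "2 * k \<le> d" using dsum by simp
  have ps: "pairswap k permutes {0..<d}" by (rule pairswap_permutes[OF k2d])
  have st: "\<sigma> (\<tau> j) = \<tau> (pairswap k j)" if j: "j < d" for j
  proof (cases "j < 2 * k")
    case True
    have jk: "j div 2 < k" using True by simp
    have pP: "pl ! (j div 2) \<in> P" using plP[OF jk] .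
    then have pd: "pl ! (j div 2) < d" by (simp add: P_def)
    show ?thesis
    proof (cases "even j")
      case True
      have j1: "Suc j < 2 * k" using True \<open>j < 2 * k\<close> by (rule even_lt_2k)
      have "Suc j div 2 = j div 2" using True by simp
      moreover have "odd (Suc j)" using True by simp
      ultimately show ?thesis using True \<open>j < 2 * k\<close> j1
        by (simp add: \<tau>_def pairswap_def)
    next
      case False
      then have j1: "j \<ge> 1" by (cases j) auto
      obtain q where q: "j = 2 * q + 1" using False oddE by blast
      have "(j - 1) div 2 = j div 2" using q by simp
      moreover have "even (j - 1)" using False j1 by simp
      moreover have "j - 1 < 2 * k" using \<open>j < 2 * k\<close> by simp
      ultimately show ?thesis using False \<open>j < 2 * k\<close> ss[OF pd]
        by (simp add: \<tau>_def pairswap_def)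
    qed
  next
    case False
    have "j - 2 * k < d - 2 * k" using j False by simp
    then have "fl ! (j - 2 * k) \<in> Fs" by (rule flF)
    then have "\<sigma> (fl ! (j - 2 * k)) = fl ! (j - 2 * k)" by (simp add: Fs_def)
    then show ?thesis using False j by (simp add: \<tau>_def pairswap_def)
  qed
  define es where "es = (\<lambda>i. if i < \<sigma> i then 0 else if \<sigma> i < i then bs i mod m
                        else (SOME e. e < m \<and> [snd (rep i) + e = a * e + bs i] (mod m)))"
  have es_fix: "es i < m \<and> [snd (rep i) + es i = a * es i + bs i] (mod m)" if i: "i \<in> Fs" for i
  proof -
    have "\<sigma> i = i" using i by (simp add: Fs_def)
    then have "es i = (SOME e. e < m \<and> [snd (rep i) + e = a * e + bs i] (mod m))" by (simp add: es_def)
    then show ?thesis using someI_ex[of "\<lambda>e. e < m \<and> [snd (rep i) + e = a * e + bs i] (mod m)"] repT[OF i]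
      by simp
  qed
  have es_lt: "es i < m" if "i < d" for i
  proof (cases "\<sigma> i = i")
    case True then show ?thesis using es_fix[of i] that by (simp add: Fs_def)
  next
    case False then show ?thesis using m by (auto simp: es_def)
  qed
  define c0 where "c0 = 1 mod m"
  have c0u: "is_unit_mod m c0" using m by (cases "m = 1") (auto simp: c0_def is_unit_mod_def)
  define w where "w = welem d m \<tau> c0 es"
  have wW: "w \<in> Weq d m" unfolding w_def by (rule WeqI[OF tp c0u es_lt])
  have c0y: "[c0 * y = y] (mod m)" for y by (simp add: c0_def cong_def mod_mult_left_eq)
  let ?I = "welem d m (pairswap k) a (bsI k t)"
  have K: "[c0 * bsI k t (pairswap k j) + es (\<tau> (pairswap k j)) = a * es (\<tau> j) + bs (\<sigma> (\<tau> j))] (mod m)"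
    if j: "j < d" for j
  proof (cases "j < 2 * k")
    case True
    have jk: "j div 2 < k" using True by simp
    define p where "p = pl ! (j div 2)"
    have pP: "p \<in> P" unfolding p_def using plP[OF jk] .
    then have pd: "p < d" and pl: "p < \<sigma> p" by (auto simp: P_def)
    have sp: "\<sigma> (\<sigma> p) = p" using ss[OF pd] .
    have ep: "es p = 0" using pl by (simp add: es_def)
    have eq': "es (\<sigma> p) = bs (\<sigma> p) mod m" using pl sp by (simp add: es_def)
    have b0: "bsI k t (pairswap k j) = 0" using pairswap_lt[OF True] by (simp add: bsI_def)
    show ?thesis
    proof (cases "even j")
      case True
      have tj: "\<tau> j = p" using True \<open>j < 2 * k\<close> by (simp add: \<tau>_def p_def)
      have tpj: "\<tau> (pairswap k j) = \<sigma> p" using st[OF j] tj by simp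
      show ?thesis unfolding b0 tpj tj ep eq' by (simp add: cong_def)
    next
      case False
      have tj: "\<tau> j = \<sigma> p" using False \<open>j < 2 * k\<close> by (simp add: \<tau>_def p_def)
      have tpj: "\<tau> (pairswap k j) = p" using st[OF j] tj sp by simp
      have "[a * bs (\<sigma> p) + bs p = 0] (mod m)" by (rule pairrel[OF pd])
      moreover have "[a * (bs (\<sigma> p) mod m) + bs p = a * bs (\<sigma> p) + bs p] (mod m)"
        by (simp add: cong_def mod_lin1)
      ultimately have "[0 = a * (bs (\<sigma> p) mod m) + bs p] (mod m)"
        by (meson cong_sym cong_trans)
      then show ?thesis unfolding b0 tpj tj ep eq' sp by simp
    qed
  next
    case False
    have l: "j - 2 * k < d - 2 * k" using j False by simp
    define i where "i = fl ! (j - 2 * k)"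
    have iF: "i \<in> Fs" unfolding i_def by (rule flF[OF l])
    have tj: "\<tau> j = i" using False j by (simp add: \<tau>_def i_def)
    have pj: "pairswap k j = j" using False by (simp add: pairswap_fix)
    have si: "\<sigma> i = i" using iF by (simp add: Fs_def)
    have lf: "j - 2 * k < length fl" using l fl dsum by simp
    have bi: "bsI k t j = snd (rep i)" using False lf by (simp add: bsI_def t_def i_def)
    have "[c0 * snd (rep i) + es i = snd (rep i) + es i] (mod m)" by (intro cong_add c0y cong_refl)
    also have "[snd (rep i) + es i = a * es i + bs i] (mod m)" using es_fix[OF iF] by blast
    finally show ?thesis unfolding pj tj bi si .
  qed
  have eq: "g \<circ> w = w \<circ> ?I"
  proof
    fix p
    show "(g \<circ> w) p = (w \<circ> ?I) p"
    proof (cases "p \<in> pts d m")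
      case False
      then show ?thesis by (simp add: gd w_def welem_out)
    next
      case True
      then obtain x j where p: "p = (x, j)" and x: "x < m" and j: "j < d" by (cases p) auto
      have tjd: "\<tau> j < d" using perm_lt[OF tp j] .
      have pjd: "pairswap k j < d" using perm_lt[OF ps j] .
      have G: "(g \<circ> w) p = ((a * ((c0 * x + es (\<tau> j)) mod m) + bs (\<sigma> (\<tau> j))) mod m, \<sigma> (\<tau> j))"
        using p x j m tjd by (simp add: gd w_def welem_in)
      have W: "(w \<circ> ?I) p = ((c0 * ((a * x + bsI k t (pairswap k j)) mod m) + es (\<tau> (pairswap k j))) mod m,
                              \<tau> (pairswap k j))"
        using p x j m pjd by (simp add: w_def welem_in)
      have "(c0 * ((a * x + bsI k t (pairswap k j)) mod m) + es (\<tau> (pairswap k j))) mod m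
          = (a * ((c0 * x + es (\<tau> j)) mod m) + bs (\<sigma> (\<tau> j))) mod m"
        by (rule comp_eq[OF K[OF j]])
      then show ?thesis unfolding G W using st[OF j] by simp
    qed
  qed
  have cj: "conj_in (Weq d m) g (Irep d m k a t)"
    unfolding Irep_def' by (rule conj_swap[OF wW eq])
  have inI: "(k, a, t) \<in> Iidx d m R"
  proof -
    have "length t = d - 2 * k" using fl dsum by (simp add: t_def)
    moreover have "set t \<subseteq> R" using repR fl by (auto simp: t_def)
    moreover have "\<forall>h\<in>set t. fst h = a" using repT fl by (auto simp: t_def)
    moreover have "sorted_wrt lex_le t" unfolding lex_le_eq t_def fl_def by simp
    moreover have "k \<le> d div 2" using k2d by simp
    ultimately show ?thesis using a a2 by (simp add: Iidx_def)
  qed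
  show ?thesis using inI cj by blast
qed

theorem proposition6p24:
  fixes d m :: nat and R :: "(nat \<times> nat) set"
  assumes "d > 0" and "m > 0"
    and R_inv: "\<forall>h\<in>R. hol_involution m h"
    and R_rep: "\<forall>h. hol_involution m h \<longrightarrow> (\<exists>!r. r \<in> R \<and> hol_conj m r h)"
  shows
    "((\<forall>a. is_unit_mod m a \<and> [a ^ d = 1] (mod rad' m) \<longrightarrow>
           Lrep d m a \<in> Weq d m \<and> full_cycle_on (pts d m) (Lrep d m a))
     \<and> (\<forall>a a'. is_unit_mod m a \<and> [a ^ d = 1] (mod rad' m) \<and>
               is_unit_mod m a' \<and> [a' ^ d = 1] (mod rad' m) \<and>
               conj_in (Weq d m) (Lrep d m a) (Lrep d m a') \<longrightarrow> a = a')
     \<and> (\<forall>g\<in>Weq d m. full_cycle_on (pts d m) g \<longrightarrow>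
           (\<exists>a. is_unit_mod m a \<and> [a ^ d = 1] (mod rad' m) \<and> conj_in (Weq d m) g (Lrep d m a))))
     \<and> ((\<forall>(k, a, t)\<in>Iidx d m R. Irep d m k a t \<in> Weq d m \<and> involution (Irep d m k a t))
     \<and> (\<forall>(k, a, t)\<in>Iidx d m R. \<forall>(k', a', t')\<in>Iidx d m R.
           conj_in (Weq d m) (Irep d m k a t) (Irep d m k' a' t') \<longrightarrow> (k, a, t) = (k', a', t'))
     \<and> (\<forall>g\<in>Weq d m. involution g \<longrightarrow>
           (\<exists>(k, a, t)\<in>Iidx d m R. conj_in (Weq d m) g (Irep d m k a t))))"
proof -
  have m: "m > 0" using assms(2) .
  have d: "d > 0" using assms(1) .
  have P1: "\<forall>a. is_unit_mod m a \<and> [a ^ d = 1] (mod rad' m) \<longrightarrow>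
           Lrep d m a \<in> Weq d m \<and> full_cycle_on (pts d m) (Lrep d m a)"
    using Lrep_in_Weq L_full d by blast
  have P2: "\<forall>a a'. is_unit_mod m a \<and> [a ^ d = 1] (mod rad' m) \<and>
               is_unit_mod m a' \<and> [a' ^ d = 1] (mod rad' m) \<and>
               conj_in (Weq d m) (Lrep d m a) (Lrep d m a') \<longrightarrow> a = a'"
    using L_distinct d by blast
  have P3: "\<forall>g\<in>Weq d m. full_cycle_on (pts d m) g \<longrightarrow>
           (\<exists>a. is_unit_mod m a \<and> [a ^ d = 1] (mod rad' m) \<and> conj_in (Weq d m) g (Lrep d m a))"
    using cycle_conj d by blast
  have Q1: "\<forall>(k, a, t)\<in>Iidx d m R. Irep d m k a t \<in> Weq d m \<and> involution (Irep d m k a t)"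
    using Irep_in_Weq[OF m R_inv] Irep_invol[OF m R_inv] by blast
  have Q2: "\<forall>(k, a, t)\<in>Iidx d m R. \<forall>(k', a', t')\<in>Iidx d m R.
           conj_in (Weq d m) (Irep d m k a t) (Irep d m k' a' t') \<longrightarrow> (k, a, t) = (k', a', t')"
    using Irep_unique[OF d m R_inv R_rep] by blast
  have Q3: "\<forall>g\<in>Weq d m. involution g \<longrightarrow>
           (\<exists>(k, a, t)\<in>Iidx d m R. conj_in (Weq d m) g (Irep d m k a t))"
    using invol_conj[OF d R_inv R_rep] by blast
  show ?thesis using P1 P2 P3 Q1 Q2 Q3 by blast
qed

end
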